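(* Let $\sigma\ge0$, $\gamma>0$, $V=\sqrt{1+\sigma}$, let $(n^\varepsilon,u^\varepsilon,\phi^\varepsilon)$ be the solitary wave solution, and set $\widetilde N_\varepsilon(\xi)=\frac{n^\varepsilon(\xi)-1}{\varepsilon}$, $\widetilde E_\varepsilon(\xi)=\frac{-(\phi^\varepsilon)'(\xi)}{\varepsilon}$, and $h(n)=\frac{(V+\gamma\varepsilon)^2}{n^3}-\frac{\sigma}{n}$. There exist positive constants $\varepsilon_0$, $C$, $\delta_0$, independent of $\varepsilon$ and $\xi$, such that: (1) for all $0<\varepsilon<\varepsilon_0$, \[ \widetilde N_\varepsilon(0)>2\gamma V^{-1},\quad 4\gamma^2>\widetilde E_\varepsilon'(0)>2\gamma^2,\quad \tfrac12<\sup_{\xi\in\mathbb{R}}h(n^\varepsilon(\xi))<\tfrac32, \] \[ \sup_{\xi\in\mathbb{R}}\big(|\widetilde N_\varepsilon'(\xi)|+|\widetilde E_\varepsilon(\xi)|+|\widetilde E_\varepsilon''(\xi)|\big)\le C; \] (2) if $0<\delta<\delta_0$ ($\delta$ independent of $\varepsilon$ and $\xi$), then for all $0<\varepsilon<\varepsilon_0$ and every $\xi$ at which $\widetilde N_\varepsilon(\xi)\le\delta$, one has $|\widetilde E_\varepsilon(\xi)|>\sqrt\gamma\,\widetilde N_\varepsilon(\xi)$.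
   Context: For $\varepsilon>0$, consider the system in $\xi\in\mathbb{R}$: $-(V+\gamma\varepsilon)n'+(nu)'=0$, $-(V+\gamma\varepsilon)u'+uu'+\sigma n'/n=-\phi'$, $\varepsilon\phi''=e^\phi-n$, with $n\to1,u\to0,\phi\to0$ as $|\xi|\to\infty$. With $V=\sqrt{1+\sigma}$, for all sufficiently small $\varepsilon>0$ it has a non-trivial smooth solution unique up to translation; the "solitary wave solution" $(n^\varepsilon,u^\varepsilon,\phi^\varepsilon)$ is the translate that is even in $\xi$ and has all components strictly decreasing on $(0,\infty)$ (so $n^\varepsilon>1$, $\widetilde N_\varepsilon>0$ on $\mathbb{R}$ and $\widetilde E_\varepsilon\ge0$ on $[0,\infty)$). *)

theory Defs
  imports "HOL-Analysis.Analysis"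
begin

definition smooth_fun :: "(real \<Rightarrow> real) \<Rightarrow> bool" where
  "smooth_fun f \<longleftrightarrow> (\<forall>k x. ((deriv ^^ k) f) differentiable (at x))"

definition solves_system ::
  "real \<Rightarrow> real \<Rightarrow> real \<Rightarrow> real \<Rightarrow> (real \<Rightarrow> real) \<Rightarrow> (real \<Rightarrow> real) \<Rightarrow> (real \<Rightarrow> real) \<Rightarrow> bool" where
  "solves_system \<sigma> \<gamma> V \<epsilon> n u \<phi> \<longleftrightarrow>
     smooth_fun n \<and> smooth_fun u \<and> smooth_fun \<phi> \<and>
     (\<forall>x. n x > 0) \<and>
     (\<forall>x. - (V + \<gamma> * \<epsilon>) * deriv n x + deriv (\<lambda>y. n y * u y) x = 0) \<and>
     (\<forall>x. - (V + \<gamma> * \<epsilon>) * deriv u x + u x * deriv u x + \<sigma> * deriv n x / n x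
            = - deriv \<phi> x) \<and>
     (\<forall>x. \<epsilon> * deriv (deriv \<phi>) x = exp (\<phi> x) - n x) \<and>
     (n \<longlongrightarrow> 1) at_top \<and> (n \<longlongrightarrow> 1) at_bot \<and>
     (u \<longlongrightarrow> 0) at_top \<and> (u \<longlongrightarrow> 0) at_bot \<and>
     (\<phi> \<longlongrightarrow> 0) at_top \<and> (\<phi> \<longlongrightarrow> 0) at_bot"

definition solitary_wave ::
  "real \<Rightarrow> real \<Rightarrow> real \<Rightarrow> real \<Rightarrow> (real \<Rightarrow> real) \<Rightarrow> (real \<Rightarrow> real) \<Rightarrow> (real \<Rightarrow> real) \<Rightarrow> bool" where
  "solitary_wave \<sigma> \<gamma> V \<epsilon> n u \<phi> \<longleftrightarrow>
     solves_system \<sigma> \<gamma> V \<epsilon> n u \<phi> \<and>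
     \<not> (n = (\<lambda>_. 1) \<and> u = (\<lambda>_. 0) \<and> \<phi> = (\<lambda>_. 0)) \<and>
     (\<forall>x. n (-x) = n x \<and> u (-x) = u x \<and> \<phi> (-x) = \<phi> x) \<and>
     (\<forall>x y. 0 < x \<longrightarrow> x < y \<longrightarrow> n y < n x \<and> u y < u x \<and> \<phi> y < \<phi> x)"

end

theory Submission
  imports Defs
begin

definition FF :: "real \<Rightarrow> real \<Rightarrow> real \<Rightarrow> real" where
  "FF s c m = c\<^sup>2/2*(1 - 1/m\<^sup>2) - s * ln m"
definition hh :: "real \<Rightarrow> real \<Rightarrow> real \<Rightarrow> real" where
  "hh s c m = c\<^sup>2/m^3 - s/m"
definition hp :: "real \<Rightarrow> real \<Rightarrow> real \<Rightarrow> real" where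
  "hp s c m = s/m\<^sup>2 - 3 * c\<^sup>2/m^4"
definition hpp :: "real \<Rightarrow> real \<Rightarrow> real \<Rightarrow> real" where
  "hpp s c m = 12 * c\<^sup>2/m^5 - 2 * s/m^3"

lemma FF_deriv: "m > 0 \<Longrightarrow> (FF s c has_real_derivative hh s c m) (at m)"
  unfolding FF_def hh_def
  by (auto intro!: derivative_eq_intros simp: field_simps power2_eq_square power3_eq_cube)

lemma hh_deriv: "m > 0 \<Longrightarrow> (hh s c has_real_derivative hp s c m) (at m)"
  unfolding hp_def hh_def
  by (auto intro!: derivative_eq_intros simp: field_simps power2_eq_square power3_eq_cube eval_nat_numeral)

lemma hp_deriv: "m > 0 \<Longrightarrow> (hp s c has_real_derivative hpp s c m) (at m)"
  unfolding hp_def hpp_def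
  by (auto intro!: derivative_eq_intros simp: field_simps power2_eq_square power3_eq_cube eval_nat_numeral)

lemma shift_deriv:
  assumes "\<And>m. m > 0 \<Longrightarrow> (f has_real_derivative f' m) (at m)" "t > -1"
  shows "((\<lambda>t. f (1+t)) has_real_derivative f' (1+t)) (at t within S)"
proof -
  have "((\<lambda>t. 1+t) has_real_derivative 1) (at t)"
    by (auto intro!: derivative_eq_intros)
  from DERIV_chain2[OF assms(1) this] assms(2) show ?thesis
    by (auto intro: has_field_derivative_at_within)
qed

lemma FF1: "t > -1 \<Longrightarrow> ((\<lambda>t. FF s c (1+t)) has_real_derivative hh s c (1+t)) (at t within S)"
  by (rule shift_deriv[OF FF_deriv])
lemma hh1: "t > -1 \<Longrightarrow> ((\<lambda>t. hh s c (1+t)) has_real_derivative hp s c (1+t)) (at t within S)"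
  by (rule shift_deriv[OF hh_deriv])
lemma hp1: "t > -1 \<Longrightarrow> ((\<lambda>t. hp s c (1+t)) has_real_derivative hpp s c (1+t)) (at t within S)"
  by (rule shift_deriv[OF hp_deriv])

definition gg :: "real \<Rightarrow> real \<Rightarrow> real \<Rightarrow> real" where
  "gg s c t = exp (FF s c (1+t)) - (1+t)"
definition g1 :: "real \<Rightarrow> real \<Rightarrow> real \<Rightarrow> real" where
  "g1 s c t = exp (FF s c (1+t)) * hh s c (1+t) - 1"
definition g2 :: "real \<Rightarrow> real \<Rightarrow> real \<Rightarrow> real" where
  "g2 s c t = exp (FF s c (1+t)) * ((hh s c (1+t))\<^sup>2 + hp s c (1+t))"
definition g3 :: "real \<Rightarrow> real \<Rightarrow> real \<Rightarrow> real" where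
  "g3 s c t = exp (FF s c (1+t)) * (hh s c (1+t) * ((hh s c (1+t))\<^sup>2 + hp s c (1+t))
      + 2 * hh s c (1+t) * hp s c (1+t) + hpp s c (1+t))"
definition GG :: "real \<Rightarrow> real \<Rightarrow> real \<Rightarrow> real" where
  "GG s c t = exp (FF s c (1+t)) + c\<^sup>2/(1+t) + s * (1+t) - 1 - c\<^sup>2 - s"
definition G1 :: "real \<Rightarrow> real \<Rightarrow> real \<Rightarrow> real" where
  "G1 s c t = gg s c t * hh s c (1+t)"
definition G2 :: "real \<Rightarrow> real \<Rightarrow> real \<Rightarrow> real" where
  "G2 s c t = g1 s c t * hh s c (1+t) + gg s c t * hp s c (1+t)"

lemma gg_deriv: "t > -1 \<Longrightarrow> (gg s c has_real_derivative g1 s c t) (at t)"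
  unfolding gg_def[abs_def] g1_def
  by (auto intro!: derivative_eq_intros FF1)

lemma g1_deriv: "t > -1 \<Longrightarrow> (g1 s c has_real_derivative g2 s c t) (at t)"
  unfolding g1_def[abs_def] g2_def
  apply (rule derivative_eq_intros FF1 hh1 hp1 refl | assumption)+
  by (simp add: algebra_simps power2_eq_square)

lemma g2_deriv: "t > -1 \<Longrightarrow> (g2 s c has_real_derivative g3 s c t) (at t)"
  unfolding g2_def[abs_def] g3_def
  apply (rule derivative_eq_intros FF1 hh1 hp1 refl | assumption)+
  by (simp add: algebra_simps power2_eq_square)

lemma GGm_deriv: assumes "m > 0" shows
  "((\<lambda>m. exp (FF s c m) + c\<^sup>2/m + s * m - 1 - c\<^sup>2 - s) has_real_derivative
     (exp (FF s c m) - m) * hh s c m) (at m)"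
proof -
  have nz: "m \<noteq> 0" using assms by simp
  show ?thesis
  apply (rule derivative_eq_intros FF_deriv assms nz refl)+
  using assms by (simp add: hh_def field_simps power2_eq_square power3_eq_cube)
qed

lemma GG_deriv: assumes "t > -1" shows "(GG s c has_real_derivative G1 s c t) (at t)"
  using shift_deriv[OF GGm_deriv assms, of s c UNIV]
  unfolding GG_def[abs_def] G1_def gg_def by simp

lemma G1_deriv: "t > -1 \<Longrightarrow> (G1 s c has_real_derivative G2 s c t) (at t)"
  unfolding G1_def[abs_def] G2_def
  apply (rule derivative_eq_intros gg_deriv hh1 refl | assumption)+
  by (simp add: algebra_simps)


lemma mvt_abs:
  fixes f f' :: "real \<Rightarrow> real"
  assumes t0: "0 \<le> t"
    and d: "\<And>s. 0 \<le> s \<Longrightarrow> s \<le> t \<Longrightarrow> (f has_real_derivative f' s) (at s)"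
    and b: "\<And>s. 0 \<le> s \<Longrightarrow> s \<le> t \<Longrightarrow> \<bar>f' s\<bar> \<le> M"
  shows "\<bar>f t - f 0\<bar> \<le> M * t"
proof (cases "t = 0")
  case True then show ?thesis by simp
next
  case False
  then have "0 < t" using t0 by simp
  from MVT2[OF this, of f f'] d obtain z where z: "0 < z" "z < t" "f t - f 0 = (t - 0) * f' z"
    by auto
  have "\<bar>f t - f 0\<bar> = t * \<bar>f' z\<bar>" using z \<open>0 < t\<close> by (simp add: abs_mult)
  also have "\<dots> \<le> t * M" using b[of z] z \<open>0 < t\<close> by (intro mult_left_mono) auto
  finally show ?thesis by (simp add: mult.commute)
qed

lemma div_le_self': "0 \<le> (a::real) \<Longrightarrow> 1 \<le> b \<Longrightarrow> a / b \<le> a"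
  by (metis div_by_1 frac_le less_numeral_extra(1) order_class.order_eq_iff)

lemma hh_bnd: assumes "m \<ge> 1" "s \<ge> 0" shows "\<bar>hh s c m\<bar> \<le> c\<^sup>2 + s"
proof -
  have a: "0 \<le> c\<^sup>2/m^3" "c\<^sup>2/m^3 \<le> c\<^sup>2" using assms
    by (auto intro!: div_le_self' one_le_power)
  have b: "0 \<le> s/m" "s/m \<le> s" using assms by (auto intro!: div_le_self')
  show ?thesis unfolding hh_def using a b by linarith
qed

lemma hp_bnd: assumes "m \<ge> 1" "s \<ge> 0" shows "\<bar>hp s c m\<bar> \<le> 3 * c\<^sup>2 + s"
proof -
  have a: "0 \<le> 3 * c\<^sup>2/m^4" "3 * c\<^sup>2/m^4 \<le> 3 * c\<^sup>2" using assms
    by (auto intro!: div_le_self' one_le_power)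
  have b: "0 \<le> s/m\<^sup>2" "s/m\<^sup>2 \<le> s" using assms by (auto intro!: div_le_self' one_le_power)
  show ?thesis unfolding hp_def using a b by linarith
qed

lemma hpp_bnd: assumes "m \<ge> 1" "s \<ge> 0" shows "\<bar>hpp s c m\<bar> \<le> 12 * c\<^sup>2 + 2 * s"
proof -
  have a: "0 \<le> 12 * c\<^sup>2/m^5" "12 * c\<^sup>2/m^5 \<le> 12 * c\<^sup>2" using assms
    by (auto intro!: div_le_self' one_le_power)
  have b: "0 \<le> 2 * s/m^3" "2 * s/m^3 \<le> 2 * s" using assms by (auto intro!: div_le_self' one_le_power)
  show ?thesis unfolding hpp_def using a b by linarith
qed

lemma FF_le: assumes "m \<ge> 1" "s \<ge> 0" shows "FF s c m \<le> c\<^sup>2/2"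
proof -
  have "0 \<le> 1/m\<^sup>2" by simp
  then have "c\<^sup>2/2*(1 - 1/m\<^sup>2) \<le> c\<^sup>2/2" by (simp add: mult_left_le)
  moreover have "s * ln m \<ge> 0" using assms by simp
  ultimately show ?thesis unfolding FF_def by linarith
qed

lemma FF_1: "FF s c 1 = 0" by (simp add: FF_def)

lemma poly_bnd: "\<bar>a::real\<bar> \<le> A \<Longrightarrow> \<bar>b\<bar> \<le> B \<Longrightarrow> \<bar>q\<bar> \<le> Q \<Longrightarrow>
   \<bar>a*(a\<^sup>2+b) + 2*a*b + q\<bar> \<le> A*(A\<^sup>2+B) + 2*A*B + Q"
proof -
  assume h: "\<bar>a::real\<bar> \<le> A" "\<bar>b\<bar> \<le> B" "\<bar>q\<bar> \<le> Q"
  have 1: "\<bar>a\<^sup>2+b\<bar> \<le> A\<^sup>2 + B"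
    by (smt (verit, ccfv_SIG) h(1,2) power2_minus power_mono realpow_square_minus_le)
  have "\<bar>a*(a\<^sup>2+b)\<bar> \<le> A*(A\<^sup>2+B)" unfolding abs_mult
    using h 1 by (intro mult_mono) auto
  moreover have "\<bar>2*a*b\<bar> \<le> 2*A*B" unfolding abs_mult
    using h by (intro mult_mono) auto
  ultimately show ?thesis using h(3) by linarith
qed

lemma g3_bnd: assumes "t \<ge> 0" "s \<ge> 0" "c\<^sup>2 \<le> CC"
  shows "\<bar>g3 s c t\<bar> \<le> exp (CC/2) * ((CC + s)*((CC+s)\<^sup>2 + (3*CC+s)) + 2*(CC+s)*(3*CC+s) + (12*CC+2* s))"
proof -
  have m: "1 + t \<ge> 1" using assms by simp
  have e: "exp (FF s c (1+t)) \<le> exp (CC/2)"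
    using FF_le[OF m assms(2), of c] assms(3) by simp
  have p: "\<bar>hh s c (1+t) * ((hh s c (1+t))\<^sup>2 + hp s c (1+t)) + 2 * hh s c (1+t) * hp s c (1+t) + hpp s c (1+t)\<bar>
     \<le> (CC + s)*((CC+s)\<^sup>2 + (3*CC+s)) + 2*(CC+s)*(3*CC+s) + (12*CC+2* s)"
    apply (rule poly_bnd)
    using hh_bnd[OF m assms(2), of c] hp_bnd[OF m assms(2), of c] hpp_bnd[OF m assms(2), of c] assms(3)
    by auto
  show ?thesis unfolding g3_def abs_mult
    using e p by (intro mult_mono) auto
qed


context
  fixes V \<gamma> \<sigma> :: real
  assumes V1: "V \<ge> 1" and gpos: "\<gamma> > 0" and sg: "\<sigma> = V\<^sup>2 - 1"
begin

lemma sg0: "\<sigma> \<ge> 0" using V1 sg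
  by (smt (verit) one_le_power)

lemma c_facts: assumes "0 < \<epsilon>" "\<epsilon> \<le> 1"
  shows "(V + \<gamma>*\<epsilon>)\<^sup>2 \<le> (V+\<gamma>)\<^sup>2" "(V + \<gamma>*\<epsilon>)\<^sup>2 - V\<^sup>2 = 2*V*\<gamma>*\<epsilon> + \<gamma>\<^sup>2*\<epsilon>\<^sup>2"
    "0 \<le> (V + \<gamma>*\<epsilon>)\<^sup>2 - V\<^sup>2" "(V + \<gamma>*\<epsilon>)\<^sup>2 - V\<^sup>2 \<le> (2*V*\<gamma> + \<gamma>\<^sup>2) * \<epsilon>"
proof -
  have "\<gamma>*\<epsilon> \<le> \<gamma>" using assms gpos by (simp add: mult_left_le)
  moreover have "0 \<le> V + \<gamma>*\<epsilon>" using assms gpos V1 by simp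
  ultimately show "(V + \<gamma>*\<epsilon>)\<^sup>2 \<le> (V+\<gamma>)\<^sup>2" by (intro power_mono) auto
  show e: "(V + \<gamma>*\<epsilon>)\<^sup>2 - V\<^sup>2 = 2*V*\<gamma>*\<epsilon> + \<gamma>\<^sup>2*\<epsilon>\<^sup>2" by (simp add: power2_eq_square algebra_simps)
  show "0 \<le> (V + \<gamma>*\<epsilon>)\<^sup>2 - V\<^sup>2" unfolding e using assms gpos V1 by simp
  have "\<epsilon>\<^sup>2 \<le> \<epsilon>" using assms by (simp add: power2_eq_square mult_left_le)
  then have "\<gamma>\<^sup>2*\<epsilon>\<^sup>2 \<le> \<gamma>\<^sup>2*\<epsilon>" by (simp add: mult_left_mono)
  then show "(V + \<gamma>*\<epsilon>)\<^sup>2 - V\<^sup>2 \<le> (2*V*\<gamma> + \<gamma>\<^sup>2) * \<epsilon>" unfolding e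
    by (simp add: algebra_simps)
qed

lemma estA: "\<exists>K\<ge>0. \<forall>\<epsilon> t. 0 < \<epsilon> \<longrightarrow> \<epsilon> \<le> 1 \<longrightarrow> 0 \<le> t \<longrightarrow>
   \<bar>g2 \<sigma> (V+\<gamma>*\<epsilon>) t + 2*V\<^sup>2\<bar> \<le> K * (\<epsilon> + t)"
proof -
  define CC where "CC = (V+\<gamma>)\<^sup>2"
  define M3 where "M3 = exp (CC/2) * ((CC + \<sigma>)*((CC+\<sigma>)\<^sup>2 + (3*CC+\<sigma>)) + 2*(CC+\<sigma>)*(3*CC+\<sigma>) + (12*CC+2*\<sigma>))"
  define D where "D = 2*V*\<gamma> + \<gamma>\<^sup>2"
  have M30: "M3 \<ge> 0" unfolding M3_def CC_def using sg0 by simp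
  have D0: "D \<ge> 0" unfolding D_def using V1 gpos by simp
  show ?thesis
  proof (intro exI[of _ "M3 + D + D\<^sup>2"] conjI allI impI)
    show "0 \<le> M3 + D + D\<^sup>2" using M30 D0 by simp
    fix \<epsilon> t :: real assume e: "0 < \<epsilon>" "\<epsilon> \<le> 1" and t: "0 \<le> t"
    define c where "c = V + \<gamma>*\<epsilon>"
    note cf = c_facts[OF e, folded c_def]
    define dc where "dc = c\<^sup>2 - V\<^sup>2"
    have dc0: "0 \<le> dc" "dc \<le> D*\<epsilon>" using cf unfolding dc_def D_def by auto
    have "\<bar>g2 \<sigma> c t - g2 \<sigma> c 0\<bar> \<le> M3 * t"
    proof (rule mvt_abs[OF t])
      fix s assume "0 \<le> s" "s \<le> t"
      then show "(g2 \<sigma> c has_real_derivative g3 \<sigma> c s) (at s)" by (intro g2_deriv) simp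
      show "\<bar>g3 \<sigma> c s\<bar> \<le> M3" unfolding M3_def
        using g3_bnd[OF \<open>0 \<le> s\<close> sg0, of c CC] cf(1) CC_def by simp
    qed
    moreover have "g2 \<sigma> c 0 + 2*V\<^sup>2 = dc\<^sup>2 - dc"
      unfolding g2_def hh_def hp_def dc_def sg by (simp add: FF_1 power2_eq_square algebra_simps)
    moreover have "\<bar>dc\<^sup>2 - dc\<bar> \<le> D*\<epsilon> + D\<^sup>2*\<epsilon>"
    proof -
      have "dc\<^sup>2 \<le> (D*\<epsilon>)\<^sup>2" using dc0 by (intro power_mono) auto
      also have "\<dots> \<le> D\<^sup>2*\<epsilon>" using e D0
        by (simp add: power2_eq_square mult_left_le mult.assoc mult_left_mono)
      finally show ?thesis using dc0 by (smt (verit) zero_le_power2)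
    qed
    ultimately have "\<bar>g2 \<sigma> c t + 2*V\<^sup>2\<bar> \<le> M3 * t + D*\<epsilon> + D\<^sup>2*\<epsilon>" by linarith
    also have "\<dots> \<le> (M3 + D + D\<^sup>2) * (\<epsilon> + t)"
      using M30 D0 e t by (simp add: algebra_simps)
    finally show "\<bar>g2 \<sigma> (V+\<gamma>*\<epsilon>) t + 2*V\<^sup>2\<bar> \<le> (M3 + D + D\<^sup>2) * (\<epsilon> + t)" unfolding c_def .
  qed
qed

lemma gg0: "gg s c 0 = 0" by (simp add: gg_def FF_1)
lemma GG0: "GG s c 0 = 0" by (simp add: GG_def FF_1)

lemma estB: "\<exists>K\<ge>0. \<forall>\<epsilon> t. 0 < \<epsilon> \<longrightarrow> \<epsilon> \<le> 1 \<longrightarrow> 0 \<le> t \<longrightarrow>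
   \<bar>g1 \<sigma> (V+\<gamma>*\<epsilon>) t - 2*V*\<gamma>*\<epsilon> + 2*V\<^sup>2*t\<bar> \<le> K * (\<epsilon> + t)\<^sup>2"
proof -
  obtain KA where KA: "KA \<ge> 0" "\<And>\<epsilon> t. 0 < \<epsilon> \<Longrightarrow> \<epsilon> \<le> 1 \<Longrightarrow> 0 \<le> t \<Longrightarrow>
   \<bar>g2 \<sigma> (V+\<gamma>*\<epsilon>) t + 2*V\<^sup>2\<bar> \<le> KA * (\<epsilon> + t)" using estA by blast
  show ?thesis
  proof (intro exI[of _ "\<gamma>\<^sup>2 + KA"] conjI allI impI)
    show "0 \<le> \<gamma>\<^sup>2 + KA" using KA by simp
    fix \<epsilon> t :: real assume e: "0 < \<epsilon>" "\<epsilon> \<le> 1" and t: "0 \<le> t"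
    define c where "c = V + \<gamma>*\<epsilon>"
    define b where "b = (\<lambda>s. g1 \<sigma> c s - 2*V*\<gamma>*\<epsilon> + 2*V\<^sup>2* s)"
    have "\<bar>b t - b 0\<bar> \<le> (KA * (\<epsilon> + t)) * t"
    proof (rule mvt_abs[OF t])
      fix s assume s: "0 \<le> s" "s \<le> t"
      show "(b has_real_derivative (g2 \<sigma> c s + 2*V\<^sup>2)) (at s)" unfolding b_def
        using s by (auto intro!: derivative_eq_intros g1_deriv)
      have "\<bar>g2 \<sigma> c s + 2*V\<^sup>2\<bar> \<le> KA * (\<epsilon> + s)" unfolding c_def using KA(2) e s by blast
      also have "\<dots> \<le> KA * (\<epsilon> + t)" using s KA(1) by (intro mult_left_mono) auto
      finally show "\<bar>g2 \<sigma> c s + 2*V\<^sup>2\<bar> \<le> KA * (\<epsilon> + t)" .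
    qed
    moreover have "b 0 = \<gamma>\<^sup>2*\<epsilon>\<^sup>2"
      unfolding b_def g1_def hh_def c_def sg by (simp add: FF_1 power2_eq_square algebra_simps)
    moreover have "\<gamma>\<^sup>2*\<epsilon>\<^sup>2 \<le> \<gamma>\<^sup>2*(\<epsilon>+t)\<^sup>2" using e t by (intro mult_left_mono power_mono) auto
    moreover have "KA * (\<epsilon> + t) * t \<le> KA * (\<epsilon> + t)\<^sup>2" using e t KA(1)
      by (simp add: power2_eq_square mult_left_mono mult.assoc)
    moreover have "(\<gamma>\<^sup>2 + KA) * (\<epsilon> + t)\<^sup>2 = \<gamma>\<^sup>2 * (\<epsilon> + t)\<^sup>2 + KA * (\<epsilon> + t)\<^sup>2"
      by (simp add: distrib_right)
    moreover have "\<gamma>\<^sup>2*\<epsilon>\<^sup>2 \<ge> 0" by simp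
    ultimately have "\<bar>b t\<bar> \<le> (\<gamma>\<^sup>2 + KA) * (\<epsilon> + t)\<^sup>2"
      by (smt (verit))
    then show "\<bar>g1 \<sigma> (V+\<gamma>*\<epsilon>) t - 2*V*\<gamma>*\<epsilon> + 2*V\<^sup>2*t\<bar> \<le> (\<gamma>\<^sup>2 + KA) * (\<epsilon> + t)\<^sup>2"
      unfolding b_def c_def .
  qed
qed

lemma estC: "\<exists>K\<ge>0. \<forall>\<epsilon> t. 0 < \<epsilon> \<longrightarrow> \<epsilon> \<le> 1 \<longrightarrow> 0 \<le> t \<longrightarrow>
   \<bar>gg \<sigma> (V+\<gamma>*\<epsilon>) t - 2*V*\<gamma>*\<epsilon>*t + V\<^sup>2*t\<^sup>2\<bar> \<le> K * (\<epsilon> + t)\<^sup>2 * t"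
proof -
  obtain KB where KB: "KB \<ge> 0" "\<And>\<epsilon> t. 0 < \<epsilon> \<Longrightarrow> \<epsilon> \<le> 1 \<Longrightarrow> 0 \<le> t \<Longrightarrow>
   \<bar>g1 \<sigma> (V+\<gamma>*\<epsilon>) t - 2*V*\<gamma>*\<epsilon> + 2*V\<^sup>2*t\<bar> \<le> KB * (\<epsilon> + t)\<^sup>2" using estB by blast
  show ?thesis
  proof (intro exI[of _ "KB"] conjI allI impI)
    show "0 \<le> KB" using KB by simp
    fix \<epsilon> t :: real assume e: "0 < \<epsilon>" "\<epsilon> \<le> 1" and t: "0 \<le> t"
    define c where "c = V + \<gamma>*\<epsilon>"
    define b where "b = (\<lambda>s. gg \<sigma> c s - 2*V*\<gamma>*\<epsilon>* s + V\<^sup>2* s\<^sup>2)"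
    have "\<bar>b t - b 0\<bar> \<le> (KB * (\<epsilon> + t)\<^sup>2) * t"
    proof (rule mvt_abs[OF t])
      fix s assume s: "0 \<le> s" "s \<le> t"
      show "(b has_real_derivative (g1 \<sigma> c s - 2*V*\<gamma>*\<epsilon> + 2*V\<^sup>2* s)) (at s)" unfolding b_def
        using s by (auto intro!: derivative_eq_intros gg_deriv simp: power2_eq_square)
      have "\<bar>g1 \<sigma> c s - 2*V*\<gamma>*\<epsilon> + 2*V\<^sup>2* s\<bar> \<le> KB * (\<epsilon> + s)\<^sup>2" unfolding c_def using KB(2) e s by blast
      also have "\<dots> \<le> KB * (\<epsilon> + t)\<^sup>2" using s e KB(1) by (intro mult_left_mono power_mono) auto
      finally show "\<bar>g1 \<sigma> c s - 2*V*\<gamma>*\<epsilon> + 2*V\<^sup>2* s\<bar> \<le> KB * (\<epsilon> + t)\<^sup>2" .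
    qed
    moreover have "b 0 = 0" unfolding b_def by (simp add: gg0)
    ultimately show "\<bar>gg \<sigma> (V+\<gamma>*\<epsilon>) t - 2*V*\<gamma>*\<epsilon>*t + V\<^sup>2*t\<^sup>2\<bar> \<le> KB * (\<epsilon> + t)\<^sup>2 * t"
      unfolding b_def c_def by simp
  qed
qed

lemma estH: "\<exists>K\<ge>0. \<forall>\<epsilon> t. 0 < \<epsilon> \<longrightarrow> \<epsilon> \<le> 1 \<longrightarrow> 0 \<le> t \<longrightarrow>
   \<bar>hh \<sigma> (V+\<gamma>*\<epsilon>) (1+t) - 1\<bar> \<le> K * (\<epsilon> + t)"
proof -
  define CC where "CC = (V+\<gamma>)\<^sup>2"
  define D where "D = 2*V*\<gamma> + \<gamma>\<^sup>2"
  have D0: "D \<ge> 0" unfolding D_def using V1 gpos by simp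
  have CC0: "CC \<ge> 0" unfolding CC_def by simp
  show ?thesis
  proof (intro exI[of _ "3*CC + \<sigma> + D"] conjI allI impI)
    show "0 \<le> 3*CC + \<sigma> + D" using D0 CC0 sg0 by simp
    fix \<epsilon> t :: real assume e: "0 < \<epsilon>" "\<epsilon> \<le> 1" and t: "0 \<le> t"
    define c where "c = V + \<gamma>*\<epsilon>"
    note cf = c_facts[OF e, folded c_def]
    have "\<bar>hh \<sigma> c (1+t) - hh \<sigma> c (1+0)\<bar> \<le> (3*CC + \<sigma>) * t"
    proof (rule mvt_abs[OF t, where f="\<lambda>s. hh \<sigma> c (1+s)"])
      fix s assume s: "0 \<le> s" "s \<le> t"
      show "((\<lambda>s. hh \<sigma> c (1+s)) has_real_derivative hp \<sigma> c (1+s)) (at s)"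
        using s by (intro hh1) simp
      have "\<bar>hp \<sigma> c (1+s)\<bar> \<le> 3*c\<^sup>2 + \<sigma>" using s sg0 by (intro hp_bnd) auto
      then show "\<bar>hp \<sigma> c (1+s)\<bar> \<le> 3*CC + \<sigma>" using cf(1) CC_def by simp
    qed
    moreover have "hh \<sigma> c (1+0) - 1 = c\<^sup>2 - V\<^sup>2" unfolding hh_def sg by simp
    moreover note cf
    ultimately have "\<bar>hh \<sigma> c (1+t) - 1\<bar> \<le> (3*CC + \<sigma>) * t + D * \<epsilon>" unfolding D_def by linarith
    also have "\<dots> \<le> (3*CC + \<sigma> + D) * (\<epsilon> + t)" using D0 CC0 sg0 e t by (simp add: algebra_simps)
    finally show "\<bar>hh \<sigma> (V+\<gamma>*\<epsilon>) (1+t) - 1\<bar> \<le> (3*CC + \<sigma> + D) * (\<epsilon> + t)" unfolding c_def .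
  qed
qed

lemma estg1: "\<exists>K\<ge>0. \<forall>\<epsilon> t. 0 < \<epsilon> \<longrightarrow> \<epsilon> \<le> 1 \<longrightarrow> 0 \<le> t \<longrightarrow> t \<le> 1 \<longrightarrow>
   \<bar>g1 \<sigma> (V+\<gamma>*\<epsilon>) t\<bar> \<le> K * (\<epsilon> + t)"
proof -
  obtain KB where KB: "KB \<ge> 0" "\<And>\<epsilon> t. 0 < \<epsilon> \<Longrightarrow> \<epsilon> \<le> 1 \<Longrightarrow> 0 \<le> t \<Longrightarrow>
   \<bar>g1 \<sigma> (V+\<gamma>*\<epsilon>) t - 2*V*\<gamma>*\<epsilon> + 2*V\<^sup>2*t\<bar> \<le> KB * (\<epsilon> + t)\<^sup>2" using estB by blast
  show ?thesis
  proof (intro exI[of _ "2*KB + 2*V*\<gamma> + 2*V\<^sup>2"] conjI allI impI)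
    show "0 \<le> 2*KB + 2*V*\<gamma> + 2*V\<^sup>2" using KB V1 gpos by simp
    fix \<epsilon> t :: real assume e: "0 < \<epsilon>" "\<epsilon> \<le> 1" and t: "0 \<le> t" "t \<le> 1"
    have sq: "(\<epsilon>+t)\<^sup>2 \<le> 2*(\<epsilon>+t)" unfolding power2_eq_square
      using e t by (intro mult_right_mono) auto
    have 1: "KB * (\<epsilon> + t)\<^sup>2 \<le> 2*KB*(\<epsilon>+t)" using mult_left_mono[OF sq KB(1)] by (simp add: algebra_simps)
    have 2: "2*V*\<gamma>*\<epsilon> \<le> 2*V*\<gamma>*(\<epsilon>+t)" "2*V\<^sup>2*t \<le> 2*V\<^sup>2*(\<epsilon>+t)"
      using V1 gpos e t by (auto intro!: mult_left_mono)
    have "\<bar>g1 \<sigma> (V+\<gamma>*\<epsilon>) t\<bar> \<le> KB * (\<epsilon> + t)\<^sup>2 + 2*V*\<gamma>*\<epsilon> + 2*V\<^sup>2*t"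
      using KB(2)[OF e t(1)] V1 gpos e t by (smt (verit) mult_nonneg_nonneg zero_le_power2)
    also have "\<dots> \<le> (2*KB + 2*V*\<gamma> + 2*V\<^sup>2) * (\<epsilon> + t)" using 1 2 by (simp add: algebra_simps)
    finally show "\<bar>g1 \<sigma> (V+\<gamma>*\<epsilon>) t\<bar> \<le> (2*KB + 2*V*\<gamma> + 2*V\<^sup>2) * (\<epsilon> + t)" .
  qed
qed

lemma estgg: "\<exists>K\<ge>0. \<forall>\<epsilon> t. 0 < \<epsilon> \<longrightarrow> \<epsilon> \<le> 1 \<longrightarrow> 0 \<le> t \<longrightarrow> t \<le> 1 \<longrightarrow>
   \<bar>gg \<sigma> (V+\<gamma>*\<epsilon>) t\<bar> \<le> K * (\<epsilon> + t) * t"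
proof -
  obtain KC where KC: "KC \<ge> 0" "\<And>\<epsilon> t. 0 < \<epsilon> \<Longrightarrow> \<epsilon> \<le> 1 \<Longrightarrow> 0 \<le> t \<Longrightarrow>
   \<bar>gg \<sigma> (V+\<gamma>*\<epsilon>) t - 2*V*\<gamma>*\<epsilon>*t + V\<^sup>2*t\<^sup>2\<bar> \<le> KC * (\<epsilon> + t)\<^sup>2 * t" using estC by blast
  show ?thesis
  proof (intro exI[of _ "2*KC + 2*V*\<gamma> + V\<^sup>2"] conjI allI impI)
    show "0 \<le> 2*KC + 2*V*\<gamma> + V\<^sup>2" using KC V1 gpos by simp
    fix \<epsilon> t :: real assume e: "0 < \<epsilon>" "\<epsilon> \<le> 1" and t: "0 \<le> t" "t \<le> 1"
    have sq: "(\<epsilon>+t)\<^sup>2 \<le> 2*(\<epsilon>+t)" unfolding power2_eq_square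
      using e t by (intro mult_right_mono) auto
    have 1: "KC * (\<epsilon> + t)\<^sup>2 * t \<le> 2*KC*(\<epsilon>+t) * t" using mult_left_mono[OF sq KC(1)] t
      by (intro mult_right_mono) (auto simp: algebra_simps)
    have 2: "2*V*\<gamma>*\<epsilon>*t \<le> 2*V*\<gamma>*(\<epsilon>+t)*t" "V\<^sup>2*t\<^sup>2 \<le> V\<^sup>2*(\<epsilon>+t)*t"
      using V1 gpos e t by (auto intro!: mult_left_mono mult_right_mono simp: power2_eq_square mult.assoc)
    have "\<bar>gg \<sigma> (V+\<gamma>*\<epsilon>) t\<bar> \<le> KC * (\<epsilon> + t)\<^sup>2 * t + 2*V*\<gamma>*\<epsilon>*t + V\<^sup>2*t\<^sup>2"
      using KC(2)[OF e t(1)] V1 gpos e t by (smt (verit) mult_nonneg_nonneg zero_le_power2)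
    also have "\<dots> \<le> (2*KC + 2*V*\<gamma> + V\<^sup>2) * (\<epsilon> + t) * t" using 1 2 by (simp add: algebra_simps)
    finally show "\<bar>gg \<sigma> (V+\<gamma>*\<epsilon>) t\<bar> \<le> (2*KC + 2*V*\<gamma> + V\<^sup>2) * (\<epsilon> + t) * t" .
  qed
qed

lemma estD: "\<exists>K\<ge>0. \<forall>\<epsilon> t. 0 < \<epsilon> \<longrightarrow> \<epsilon> \<le> 1 \<longrightarrow> 0 \<le> t \<longrightarrow> t \<le> 1 \<longrightarrow>
   \<bar>G2 \<sigma> (V+\<gamma>*\<epsilon>) t - 2*V*\<gamma>*\<epsilon> + 2*V\<^sup>2*t\<bar> \<le> K * (\<epsilon> + t)\<^sup>2"
proof -
  obtain KB where KB: "KB \<ge> 0" "\<And>\<epsilon> t. 0 < \<epsilon> \<Longrightarrow> \<epsilon> \<le> 1 \<Longrightarrow> 0 \<le> t \<Longrightarrow>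
   \<bar>g1 \<sigma> (V+\<gamma>*\<epsilon>) t - 2*V*\<gamma>*\<epsilon> + 2*V\<^sup>2*t\<bar> \<le> KB * (\<epsilon> + t)\<^sup>2" using estB by blast
  obtain K1 where K1: "K1 \<ge> 0" "\<And>\<epsilon> t. 0 < \<epsilon> \<Longrightarrow> \<epsilon> \<le> 1 \<Longrightarrow> 0 \<le> t \<Longrightarrow> t \<le> 1 \<Longrightarrow>
   \<bar>g1 \<sigma> (V+\<gamma>*\<epsilon>) t\<bar> \<le> K1 * (\<epsilon> + t)" using estg1 by blast
  obtain KH where KH: "KH \<ge> 0" "\<And>\<epsilon> t. 0 < \<epsilon> \<Longrightarrow> \<epsilon> \<le> 1 \<Longrightarrow> 0 \<le> t \<Longrightarrow>
   \<bar>hh \<sigma> (V+\<gamma>*\<epsilon>) (1+t) - 1\<bar> \<le> KH * (\<epsilon> + t)" using estH by blast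
  obtain Kg where Kg: "Kg \<ge> 0" "\<And>\<epsilon> t. 0 < \<epsilon> \<Longrightarrow> \<epsilon> \<le> 1 \<Longrightarrow> 0 \<le> t \<Longrightarrow> t \<le> 1 \<Longrightarrow>
   \<bar>gg \<sigma> (V+\<gamma>*\<epsilon>) t\<bar> \<le> Kg * (\<epsilon> + t) * t" using estgg by blast
  define CC where "CC = (V+\<gamma>)\<^sup>2"
  have CC0: "CC \<ge> 0" unfolding CC_def by simp
  define P where "P = 3*CC + \<sigma>"
  have P0: "P \<ge> 0" unfolding P_def using CC0 sg0 by simp
  show ?thesis
  proof (intro exI[of _ "KB + K1*KH + Kg*P"] conjI allI impI)
    show "0 \<le> KB + K1*KH + Kg*P" using KB K1 KH Kg P0 by simp
    fix \<epsilon> t :: real assume e: "0 < \<epsilon>" "\<epsilon> \<le> 1" and t: "0 \<le> t" "t \<le> 1"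
    define c where "c = V + \<gamma>*\<epsilon>"
    note cf = c_facts[OF e, folded c_def]
    have eq: "G2 \<sigma> c t - 2*V*\<gamma>*\<epsilon> + 2*V\<^sup>2*t =
      (g1 \<sigma> c t - 2*V*\<gamma>*\<epsilon> + 2*V\<^sup>2*t) + g1 \<sigma> c t * (hh \<sigma> c (1+t) - 1) + gg \<sigma> c t * hp \<sigma> c (1+t)"
      unfolding G2_def by (simp add: algebra_simps)
    have b1: "\<bar>g1 \<sigma> c t - 2*V*\<gamma>*\<epsilon> + 2*V\<^sup>2*t\<bar> \<le> KB * (\<epsilon> + t)\<^sup>2" using KB(2) e t unfolding c_def by blast
    have b2: "\<bar>g1 \<sigma> c t * (hh \<sigma> c (1+t) - 1)\<bar> \<le> (K1 * (\<epsilon> + t)) * (KH * (\<epsilon> + t))"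
      unfolding abs_mult using K1(2)[OF e t] KH(2)[OF e t(1)] unfolding c_def
      by (intro mult_mono) auto
    have hpb: "\<bar>hp \<sigma> c (1+t)\<bar> \<le> P" using hp_bnd[of "1+t" \<sigma> c] t sg0 cf(1) unfolding P_def CC_def by simp
    have b3: "\<bar>gg \<sigma> c t * hp \<sigma> c (1+t)\<bar> \<le> (Kg * (\<epsilon> + t) * t) * P"
      unfolding abs_mult using Kg(2)[OF e t] hpb unfolding c_def
      by (intro mult_mono) auto
    have b3': "(Kg * (\<epsilon> + t) * t) * P \<le> Kg * P * (\<epsilon> + t)\<^sup>2"
    proof -
      have "Kg * (\<epsilon> + t) * t \<le> Kg * (\<epsilon> + t) * (\<epsilon> + t)" using e t Kg(1)
        by (intro mult_left_mono) auto
      from mult_right_mono[OF this P0] show ?thesis by (simp add: power2_eq_square mult.commute mult.left_commute)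
    qed
    have "\<bar>G2 \<sigma> c t - 2*V*\<gamma>*\<epsilon> + 2*V\<^sup>2*t\<bar> \<le> KB * (\<epsilon> + t)\<^sup>2 + (K1 * (\<epsilon> + t)) * (KH * (\<epsilon> + t)) + Kg * P * (\<epsilon> + t)\<^sup>2"
      unfolding eq using b1 b2 b3 b3' by (smt (verit))
    also have "\<dots> = (KB + K1*KH + Kg*P) * (\<epsilon> + t)\<^sup>2" by (simp add: power2_eq_square algebra_simps)
    finally show "\<bar>G2 \<sigma> (V+\<gamma>*\<epsilon>) t - 2*V*\<gamma>*\<epsilon> + 2*V\<^sup>2*t\<bar> \<le> (KB + K1*KH + Kg*P) * (\<epsilon> + t)\<^sup>2"
      unfolding c_def .
  qed
qed

lemma estE1: "\<exists>K\<ge>0. \<forall>\<epsilon> t. 0 < \<epsilon> \<longrightarrow> \<epsilon> \<le> 1 \<longrightarrow> 0 \<le> t \<longrightarrow> t \<le> 1 \<longrightarrow>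
   \<bar>G1 \<sigma> (V+\<gamma>*\<epsilon>) t - 2*V*\<gamma>*\<epsilon>*t + V\<^sup>2*t\<^sup>2\<bar> \<le> K * (\<epsilon> + t)\<^sup>2 * t"
proof -
  obtain KD where KD: "KD \<ge> 0" "\<And>\<epsilon> t. 0 < \<epsilon> \<Longrightarrow> \<epsilon> \<le> 1 \<Longrightarrow> 0 \<le> t \<Longrightarrow> t \<le> 1 \<Longrightarrow>
   \<bar>G2 \<sigma> (V+\<gamma>*\<epsilon>) t - 2*V*\<gamma>*\<epsilon> + 2*V\<^sup>2*t\<bar> \<le> KD * (\<epsilon> + t)\<^sup>2" using estD by blast
  show ?thesis
  proof (intro exI[of _ "KD"] conjI allI impI)
    show "0 \<le> KD" using KD by simp
    fix \<epsilon> t :: real assume e: "0 < \<epsilon>" "\<epsilon> \<le> 1" and t: "0 \<le> t" "t \<le> 1"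
    define c where "c = V + \<gamma>*\<epsilon>"
    define b where "b = (\<lambda>s. G1 \<sigma> c s - 2*V*\<gamma>*\<epsilon>* s + V\<^sup>2* s\<^sup>2)"
    have "\<bar>b t - b 0\<bar> \<le> (KD * (\<epsilon> + t)\<^sup>2) * t"
    proof (rule mvt_abs[OF t(1)])
      fix s assume s: "0 \<le> s" "s \<le> t"
      show "(b has_real_derivative (G2 \<sigma> c s - 2*V*\<gamma>*\<epsilon> + 2*V\<^sup>2* s)) (at s)" unfolding b_def
        using s by (auto intro!: derivative_eq_intros G1_deriv simp: power2_eq_square)
      have "\<bar>G2 \<sigma> c s - 2*V*\<gamma>*\<epsilon> + 2*V\<^sup>2* s\<bar> \<le> KD * (\<epsilon> + s)\<^sup>2" unfolding c_def using KD(2) e s t by auto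
      also have "\<dots> \<le> KD * (\<epsilon> + t)\<^sup>2" using s e KD(1) by (intro mult_left_mono power_mono) auto
      finally show "\<bar>G2 \<sigma> c s - 2*V*\<gamma>*\<epsilon> + 2*V\<^sup>2* s\<bar> \<le> KD * (\<epsilon> + t)\<^sup>2" .
    qed
    moreover have "b 0 = 0" unfolding b_def by (simp add: G1_def gg0)
    ultimately show "\<bar>G1 \<sigma> (V+\<gamma>*\<epsilon>) t - 2*V*\<gamma>*\<epsilon>*t + V\<^sup>2*t\<^sup>2\<bar> \<le> KD * (\<epsilon> + t)\<^sup>2 * t"
      unfolding b_def c_def by simp
  qed
qed

lemma estE: "\<exists>K\<ge>0. \<forall>\<epsilon> t. 0 < \<epsilon> \<longrightarrow> \<epsilon> \<le> 1 \<longrightarrow> 0 \<le> t \<longrightarrow> t \<le> 1 \<longrightarrow>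
   \<bar>GG \<sigma> (V+\<gamma>*\<epsilon>) t - V*\<gamma>*\<epsilon>*t\<^sup>2 + V\<^sup>2*t^3/3\<bar> \<le> K * (\<epsilon> + t)\<^sup>2 * t\<^sup>2"
proof -
  obtain KD where KD: "KD \<ge> 0" "\<And>\<epsilon> t. 0 < \<epsilon> \<Longrightarrow> \<epsilon> \<le> 1 \<Longrightarrow> 0 \<le> t \<Longrightarrow> t \<le> 1 \<Longrightarrow>
   \<bar>G1 \<sigma> (V+\<gamma>*\<epsilon>) t - 2*V*\<gamma>*\<epsilon>*t + V\<^sup>2*t\<^sup>2\<bar> \<le> KD * (\<epsilon> + t)\<^sup>2 * t" using estE1 by blast
  show ?thesis
  proof (intro exI[of _ "KD"] conjI allI impI)
    show "0 \<le> KD" using KD by simp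
    fix \<epsilon> t :: real assume e: "0 < \<epsilon>" "\<epsilon> \<le> 1" and t: "0 \<le> t" "t \<le> 1"
    define c where "c = V + \<gamma>*\<epsilon>"
    define b where "b = (\<lambda>s. GG \<sigma> c s - V*\<gamma>*\<epsilon>* s\<^sup>2 + V\<^sup>2* s^3/3)"
    have "\<bar>b t - b 0\<bar> \<le> (KD * (\<epsilon> + t)\<^sup>2 * t) * t"
    proof (rule mvt_abs[OF t(1)])
      fix s assume s: "0 \<le> s" "s \<le> t"
      show "(b has_real_derivative (G1 \<sigma> c s - 2*V*\<gamma>*\<epsilon>* s + V\<^sup>2* s\<^sup>2)) (at s)" unfolding b_def
        using s by (auto intro!: derivative_eq_intros GG_deriv simp: power2_eq_square)
      have "\<bar>G1 \<sigma> c s - 2*V*\<gamma>*\<epsilon>* s + V\<^sup>2* s\<^sup>2\<bar> \<le> KD * (\<epsilon> + s)\<^sup>2 * s" unfolding c_def using KD(2) e s t by auto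
      also have "\<dots> \<le> KD * (\<epsilon> + t)\<^sup>2 * t" using s e KD(1)
        by (intro mult_mono mult_left_mono power_mono) auto
      finally show "\<bar>G1 \<sigma> c s - 2*V*\<gamma>*\<epsilon>* s + V\<^sup>2* s\<^sup>2\<bar> \<le> KD * (\<epsilon> + t)\<^sup>2 * t" .
    qed
    moreover have "b 0 = 0" unfolding b_def by (simp add: GG0)
    ultimately show "\<bar>GG \<sigma> (V+\<gamma>*\<epsilon>) t - V*\<gamma>*\<epsilon>*t\<^sup>2 + V\<^sup>2*t^3/3\<bar> \<le> KD * (\<epsilon> + t)\<^sup>2 * t\<^sup>2"
      unfolding b_def c_def by (simp add: power2_eq_square mult.assoc)
  qed
qed

lemma ode:
  assumes sw: "solitary_wave \<sigma> \<gamma> V \<epsilon> n u \<phi>" and e: "0 < \<epsilon>"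
  shows "\<forall>x. (n has_real_derivative deriv n x) (at x)"
    "\<forall>x. (\<phi> has_real_derivative deriv \<phi> x) (at x)"
    "\<forall>x. (deriv \<phi> has_real_derivative deriv (deriv \<phi>) x) (at x)"
    "\<forall>x. \<phi> x = FF \<sigma> (V+\<gamma>*\<epsilon>) (n x)"
    "\<forall>x. deriv \<phi> x = hh \<sigma> (V+\<gamma>*\<epsilon>) (n x) * deriv n x"
    "\<forall>x. \<epsilon> * deriv (deriv \<phi>) x = exp (\<phi> x) - n x"
    "\<forall>x. \<epsilon>/2 * (deriv \<phi> x)\<^sup>2 = GG \<sigma> (V+\<gamma>*\<epsilon>) (n x - 1)"
    "deriv \<phi> 0 = 0"
    "\<forall>x. 1 < n x \<and> n x \<le> n 0"
    "\<forall>t. 0 < t \<longrightarrow> t \<le> n 0 - 1 \<longrightarrow> GG \<sigma> (V+\<gamma>*\<epsilon>) t \<ge> 0"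
proof -
  define c where "c = V + \<gamma>*\<epsilon>"
  note S = sw[unfolded solitary_wave_def solves_system_def smooth_fun_def]
  have npos: "\<And>x. n x > 0" using S by blast
  have sn: "\<And>k x. (deriv ^^ k) n differentiable (at x)" using S by blast
  have su: "\<And>k x. (deriv ^^ k) u differentiable (at x)" using S by blast
  have sp: "\<And>k x. (deriv ^^ k) \<phi> differentiable (at x)" using S by blast
  have dn: "\<And>x. (n has_real_derivative deriv n x) (at x)"
    using sn[of 0] by (simp add: DERIV_deriv_iff_real_differentiable)
  have du: "\<And>x. (u has_real_derivative deriv u x) (at x)"
    using su[of 0] by (simp add: DERIV_deriv_iff_real_differentiable)
  have dp: "\<And>x. (\<phi> has_real_derivative deriv \<phi> x) (at x)"
    using sp[of 0] by (simp add: DERIV_deriv_iff_real_differentiable)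
  have ddp: "\<And>x. (deriv \<phi> has_real_derivative deriv (deriv \<phi>) x) (at x)"
  proof -
    fix x
    have "(deriv ^^ 1) \<phi> differentiable (at x)" using sp by blast
    then show "(deriv \<phi> has_real_derivative deriv (deriv \<phi>) x) (at x)"
      by (simp add: DERIV_deriv_iff_real_differentiable)
  qed
  show "\<forall>x. (n has_real_derivative deriv n x) (at x)" using dn by blast
  show "\<forall>x. (\<phi> has_real_derivative deriv \<phi> x) (at x)" using dp by blast
  show "\<forall>x. (deriv \<phi> has_real_derivative deriv (deriv \<phi>) x) (at x)" using ddp by blast
  have eq1: "\<And>x. - c * deriv n x + deriv (\<lambda>y. n y * u y) x = 0" using S c_def by blast
  have eq2: "\<And>x. - c * deriv u x + u x * deriv u x + \<sigma> * deriv n x / n x = - deriv \<phi> x"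
    using S c_def by blast
  have eq3: "\<And>x. \<epsilon> * deriv (deriv \<phi>) x = exp (\<phi> x) - n x" using S by blast
  then show "\<forall>x. \<epsilon> * deriv (deriv \<phi>) x = exp (\<phi> x) - n x" by blast
  have nlim: "(n \<longlongrightarrow> 1) at_top" and ulim: "(u \<longlongrightarrow> 0) at_top" and plim: "(\<phi> \<longlongrightarrow> 0) at_top"
    using S by blast+
  \<comment> \<open>first integral of eq1\<close>
  have Pc: "\<And>x. n x * u x - c * n x = - c"
  proof -
    fix x
    have d0: "\<forall>y. ((\<lambda>y. n y * u y - c * n y) has_real_derivative 0) (at y)"
    proof
      fix y
      have "((\<lambda>y. n y * u y) has_real_derivative (deriv n y * u y + n y * deriv u y)) (at y)"
        using dn du by (auto intro!: derivative_eq_intros)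
      then have "deriv (\<lambda>y. n y * u y) y = deriv n y * u y + n y * deriv u y"
        by (rule DERIV_imp_deriv)
      moreover have "((\<lambda>y. n y * u y - c * n y) has_real_derivative
          (deriv n y * u y + n y * deriv u y) - c * deriv n y) (at y)"
        using dn du by (auto intro!: derivative_eq_intros)
      ultimately show "((\<lambda>y. n y * u y - c * n y) has_real_derivative 0) (at y)"
        using eq1[of y] by (simp add: algebra_simps)
    qed
    have const: "\<And>y. n y * u y - c * n y = n 0 * u 0 - c * n 0"
      using DERIV_isconst_all[OF d0] by blast
    have l1: "((\<lambda>y. n y * u y - c * n y) \<longlongrightarrow> 1 * 0 - c * 1) at_top"
      using nlim ulim by (intro tendsto_intros)
    have fe: "(\<lambda>y. n y * u y - c * n y) = (\<lambda>y. n 0 * u 0 - c * n 0)"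
      by (rule ext) (rule const)
    have l2: "((\<lambda>y. n y * u y - c * n y) \<longlongrightarrow> n 0 * u 0 - c * n 0) at_top"
      unfolding fe by (rule tendsto_const)
    have "n 0 * u 0 - c * n 0 = - c" using tendsto_unique[OF _ l2 l1] by simp
    then show "n x * u x - c * n x = - c" using const by simp
  qed
  have ueq: "\<And>x. u x = c - c / n x"
  proof -
    fix x
    have "n x \<noteq> 0" using npos[of x] by simp
    then show "u x = c - c / n x" using Pc[of x] by (simp add: field_simps)
  qed
  \<comment> \<open>first integral of eq2\<close>
  have phiF: "\<And>x. \<phi> x = FF \<sigma> c (n x)"
  proof -
    fix x
    define Q where "Q = (\<lambda>y. - c * u y + (u y)\<^sup>2/2 + \<sigma> * ln (n y) + \<phi> y)"
    have d0: "\<forall>y. (Q has_real_derivative 0) (at y)"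
    proof
      fix y
      have "(Q has_real_derivative (- c * deriv u y + u y * deriv u y + \<sigma> * deriv n y / n y + deriv \<phi> y)) (at y)"
        unfolding Q_def using dn du dp npos[of y]
        apply (intro derivative_eq_intros)
        apply (rule refl | assumption | simp)+
        done
      then show "(Q has_real_derivative 0) (at y)" using eq2[of y] by simp
    qed
    have const: "\<And>y. Q y = Q 0"
      using DERIV_isconst_all[OF d0] by blast
    have l1: "(Q \<longlongrightarrow> - c * 0 + 0\<^sup>2/2 + \<sigma> * ln 1 + 0) at_top"
      unfolding Q_def using nlim ulim plim by (intro tendsto_intros) auto
    have fe: "Q = (\<lambda>y. Q 0)" by (rule ext) (rule const)
    have l2: "(Q \<longlongrightarrow> Q 0) at_top"
      by (subst fe) (rule tendsto_const)
    have "Q 0 = 0" using tendsto_unique[OF _ l2 l1] by simp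
    then have "Q x = 0" using const by simp
    then have "\<phi> x = c * u x - (u x)\<^sup>2/2 - \<sigma> * ln (n x)" unfolding Q_def by simp
    also have "\<dots> = FF \<sigma> c (n x)" unfolding FF_def ueq using npos[of x]
      by (simp add: field_simps power2_eq_square)
    finally show "\<phi> x = FF \<sigma> c (n x)" .
  qed
  then show "\<forall>x. \<phi> x = FF \<sigma> (V+\<gamma>*\<epsilon>) (n x)" unfolding c_def by blast
  have phiFf: "\<phi> = (\<lambda>x. FF \<sigma> c (n x))" using phiF by auto
  have dphi: "\<And>x. deriv \<phi> x = hh \<sigma> c (n x) * deriv n x"
  proof -
    fix x
    have "((\<lambda>x. FF \<sigma> c (n x)) has_real_derivative hh \<sigma> c (n x) * deriv n x) (at x)"
      by (rule DERIV_chain2[OF FF_deriv[OF npos] dn])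
    then show "deriv \<phi> x = hh \<sigma> c (n x) * deriv n x"
      using DERIV_unique[OF dp[of x]] phiFf by simp
  qed
  then show "\<forall>x. deriv \<phi> x = hh \<sigma> (V+\<gamma>*\<epsilon>) (n x) * deriv n x" unfolding c_def by blast
  have energy: "\<And>x. \<epsilon>/2 * (deriv \<phi> x)\<^sup>2 = GG \<sigma> c (n x - 1)"
  proof -
    fix x
    define W where "W = (\<lambda>y. \<epsilon>/2 * (deriv \<phi> y)\<^sup>2 - GG \<sigma> c (n y - 1))"
    have d0: "\<forall>y. (W has_real_derivative 0) (at y)"
    proof
      fix y
      have gd: "((\<lambda>y. GG \<sigma> c (n y - 1)) has_real_derivative G1 \<sigma> c (n y - 1) * deriv n y) (at y)"
      proof (rule DERIV_chain2[OF GG_deriv])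
        show "n y - 1 > -1" using npos[of y] by simp
        show "((\<lambda>y. n y - 1) has_real_derivative deriv n y) (at y)"
          using dn[of y] by (auto intro!: derivative_eq_intros)
      qed
      have "(W has_real_derivative \<epsilon>/2 * (2 * deriv \<phi> y * deriv (deriv \<phi>) y) - G1 \<sigma> c (n y - 1) * deriv n y) (at y)"
        unfolding W_def using ddp[of y] gd
        by (auto intro!: derivative_eq_intros simp: power2_eq_square)
      moreover have "G1 \<sigma> c (n y - 1) * deriv n y = (exp (\<phi> y) - n y) * deriv \<phi> y"
        unfolding G1_def gg_def dphi phiF by simp
      moreover have "\<epsilon>/2 * (2 * deriv \<phi> y * deriv (deriv \<phi>) y) = deriv \<phi> y * (\<epsilon> * deriv (deriv \<phi>) y)"
        by simp
      ultimately have "(W has_real_derivative deriv \<phi> y * (exp (\<phi> y) - n y) - (exp (\<phi> y) - n y) * deriv \<phi> y) (at y)"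
        by (simp only: eq3)
      then show "(W has_real_derivative 0) (at y)" by (simp add: mult.commute)
    qed
    have const: "\<And>y. W y = W 0"
      using DERIV_isconst_all[OF d0] by blast
    define W0 where "W0 = W 0"
    have GGlim: "((\<lambda>y. GG \<sigma> c (n y - 1)) \<longlongrightarrow> 0) at_top"
    proof -
      have "isCont (GG \<sigma> c) 0" using GG_deriv[of 0 \<sigma> c] by (intro DERIV_isCont) auto
      moreover have "((\<lambda>y. n y - 1) \<longlongrightarrow> 0) at_top" using nlim
        by (metis (no_types) LIM_zero)
      ultimately have "((\<lambda>y. GG \<sigma> c (n y - 1)) \<longlongrightarrow> GG \<sigma> c 0) at_top"
        by (rule isCont_tendsto_compose)
      then show ?thesis by (simp add: GG0)
    qed
    have Eeq: "\<And>y. \<epsilon>/2 * (deriv \<phi> y)\<^sup>2 = W0 + GG \<sigma> c (n y - 1)"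
      using const unfolding W0_def W_def by (metis diff_add_cancel add.commute)
    have Elim: "((\<lambda>y. \<epsilon>/2 * (deriv \<phi> y)\<^sup>2) \<longlongrightarrow> W0) at_top"
      unfolding Eeq using tendsto_add[OF tendsto_const GGlim, of W0] by simp
    have W0ge: "W0 \<ge> 0"
      by (rule tendsto_lowerbound[OF Elim]) (auto simp: e less_imp_le)
    have "W0 = 0"
    proof (rule ccontr)
      assume "W0 \<noteq> 0"
      then have W0p: "W0 > 0" using W0ge by simp
      have ev1: "eventually (\<lambda>y. \<epsilon>/2 * (deriv \<phi> y)\<^sup>2 > W0/2) at_top"
        using order_tendstoD(1)[OF Elim, of "W0/2"] W0p by simp
      have sh: "filterlim (\<lambda>y::real. y + 1) at_top at_top"
      proof -
        have "filterlim (\<lambda>y::real. 1 + y) at_top at_top"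
          by (rule filterlim_tendsto_add_at_top[OF tendsto_const filterlim_ident])
        then show ?thesis by (simp add: add.commute)
      qed
      have lim0: "((\<lambda>y. \<phi> (y + 1) - \<phi> y) \<longlongrightarrow> 0 - 0) at_top"
        by (intro tendsto_intros filterlim_compose[OF plim sh] plim)
      have sq: "((\<lambda>y. (\<phi> (y + 1) - \<phi> y)\<^sup>2) \<longlongrightarrow> 0) at_top"
        using tendsto_power[OF lim0, of 2] by simp
      have ev2: "eventually (\<lambda>y. (\<phi> (y + 1) - \<phi> y)\<^sup>2 < W0/\<epsilon>) at_top"
        by (rule order_tendstoD(2)[OF sq]) (use W0p e in simp)
      from ev1 obtain N1 where N1: "\<And>y. y \<ge> N1 \<Longrightarrow> \<epsilon>/2 * (deriv \<phi> y)\<^sup>2 > W0/2"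
        by (auto simp: eventually_at_top_linorder)
      from ev2 obtain N2 where N2: "\<And>y. y \<ge> N2 \<Longrightarrow> (\<phi> (y + 1) - \<phi> y)\<^sup>2 < W0/\<epsilon>"
        by (auto simp: eventually_at_top_linorder)
      define y where "y = max N1 N2"
      obtain z where z: "y < z" "z < y + 1" "\<phi> (y+1) - \<phi> y = (y + 1 - y) * deriv \<phi> z"
        using MVT2[of y "y+1" \<phi> "deriv \<phi>"] dp by auto
      have "(deriv \<phi> z)\<^sup>2 < W0/\<epsilon>" using N2[of y] z unfolding y_def by simp
      moreover have "\<epsilon>/2 * (deriv \<phi> z)\<^sup>2 > W0/2" using N1[of z] z unfolding y_def by simp
      ultimately show False using e by (simp add: field_simps)
    qed
    then show "\<epsilon>/2 * (deriv \<phi> x)\<^sup>2 = GG \<sigma> c (n x - 1)" using Eeq by simp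
  qed
  then show "\<forall>x. \<epsilon>/2 * (deriv \<phi> x)\<^sup>2 = GG \<sigma> (V+\<gamma>*\<epsilon>) (n x - 1)" unfolding c_def by blast
  have even: "\<And>x. n (-x) = n x" "\<And>x. \<phi> (-x) = \<phi> x" using S by blast+
  have mono: "\<And>x y. 0 < x \<Longrightarrow> x < y \<Longrightarrow> n y < n x" using S by blast
  have dp0: "deriv \<phi> 0 = 0"
  proof -
    have "((\<lambda>x. \<phi> (-x)) has_real_derivative deriv \<phi> (-0) * (-1)) (at 0)"
      by (rule DERIV_chain2[OF dp]) (auto intro!: derivative_eq_intros)
    then have "DERIV (\<lambda>x. \<phi> (-x)) 0 :> - deriv \<phi> 0" by simp
    moreover have "(\<lambda>x. \<phi> (-x)) = \<phi>" using even(2) by auto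
    ultimately have "DERIV \<phi> 0 :> - deriv \<phi> 0" by simp
    from DERIV_unique[OF dp[of 0] this] show ?thesis by simp
  qed
  then show "deriv \<phi> 0 = 0" .
  have ncont: "\<And>x. isCont n x" using dn by (rule DERIV_isCont)
  have nge1: "\<And>y. 0 < y \<Longrightarrow> 1 \<le> n y"
  proof -
    fix y :: real assume y: "0 < y"
    show "1 \<le> n y"
    proof (rule tendsto_upperbound[OF nlim])
      show "eventually (\<lambda>z. n z \<le> n y) at_top"
        unfolding eventually_at_top_linorder
        using mono[OF y] by (intro exI[of _ "y+1"]) (auto intro: less_imp_le)
    qed simp
  qed
  have ngt1: "\<And>y. 0 < y \<Longrightarrow> 1 < n y"
  proof -
    fix y :: real assume y: "0 < y"
    have "n (y+1) < n y" using mono[OF y] by simp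
    moreover have "1 \<le> n (y+1)" using nge1 y by simp
    ultimately show "1 < n y" by simp
  qed
  have nle0: "\<And>y. 0 < y \<Longrightarrow> n y \<le> n 0"
  proof -
    fix y :: real assume y: "0 < y"
    have "(n \<longlongrightarrow> n 0) (at_right 0)" using ncont[of 0]
      by (simp add: isCont_def filterlim_at_split)
    then show "n y \<le> n 0"
    proof (rule tendsto_lowerbound)
      show "eventually (\<lambda>z. n y \<le> n z) (at_right 0)"
        unfolding eventually_at_right[OF y]
        using mono by (intro exI[of _ y]) (auto intro: less_imp_le simp: y)
    qed simp
  qed
  have nall: "\<And>x. 1 < n x \<and> n x \<le> n 0"
  proof -
    fix x :: real
    have "0 < x \<or> x = 0 \<or> 0 < -x" by auto
    moreover have "1 < n 0" using ngt1[of 1] nle0[of 1] by simp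
    ultimately show "1 < n x \<and> n x \<le> n 0"
    proof (elim disjE)
      assume "0 < -x" then show ?thesis using ngt1[of "-x"] nle0[of "-x"] even(1)[of x] by simp
    qed (use ngt1 nle0 in auto)
  qed
  then show "\<forall>x. 1 < n x \<and> n x \<le> n 0" by blast
  show "\<forall>t. 0 < t \<longrightarrow> t \<le> n 0 - 1 \<longrightarrow> GG \<sigma> (V+\<gamma>*\<epsilon>) t \<ge> 0"
  proof (intro allI impI)
    fix t :: real assume t: "0 < t" "t \<le> n 0 - 1"
    have "eventually (\<lambda>y. n y < 1 + t) at_top"
      using order_tendstoD(2)[OF nlim] t by simp
    then obtain N where N: "\<And>y. y \<ge> N \<Longrightarrow> n y < 1 + t"
      by (auto simp: eventually_at_top_linorder)
    define y where "y = max N 0"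
    have "\<exists>x. 0 \<le> x \<and> x \<le> y \<and> n x = 1 + t"
    proof (rule IVT2')
      show "n y \<le> 1 + t" using N[of y] unfolding y_def by simp
      show "1 + t \<le> n 0" using t by simp
      show "0 \<le> y" unfolding y_def by simp
      show "continuous_on {0..y} n" using ncont by (intro continuous_at_imp_continuous_on) auto
    qed
    then obtain x where "n x = 1 + t" by blast
    then have "GG \<sigma> c t = \<epsilon>/2 * (deriv \<phi> x)\<^sup>2" using energy[of x] by simp
    also have "\<dots> \<ge> 0" using e by simp
    finally show "GG \<sigma> (V+\<gamma>*\<epsilon>) t \<ge> 0" unfolding c_def .
  qed
qed

lemma L1:
  fixes G KE \<epsilon> x X :: real
  assumes h: "\<bar>G - V*\<gamma>*\<epsilon>*(\<epsilon>*x)\<^sup>2 + V\<^sup>2*(\<epsilon>*x)^3/3\<bar> \<le> KE * (\<epsilon> + \<epsilon>*x)\<^sup>2 * (\<epsilon>*x)\<^sup>2"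
    and e: "0 < \<epsilon>" "\<epsilon> \<le> 1" and x: "0 \<le> x" "x \<le> X" and K: "KE \<ge> 0"
  shows "\<bar>G/\<epsilon>^3 - x\<^sup>2*(V*\<gamma> - V\<^sup>2*x/3)\<bar> \<le> KE*(1+X)\<^sup>2 * \<epsilon> * x\<^sup>2"
proof -
  have eq: "G/\<epsilon>^3 - x\<^sup>2*(V*\<gamma> - V\<^sup>2*x/3) = (G - V*\<gamma>*\<epsilon>*(\<epsilon>*x)\<^sup>2 + V\<^sup>2*(\<epsilon>*x)^3/3)/\<epsilon>^3"
    using e by (simp add: field_simps power2_eq_square power3_eq_cube)
  have eq2: "KE * (\<epsilon> + \<epsilon>*x)\<^sup>2 * (\<epsilon>*x)\<^sup>2 / \<epsilon>^3 = KE * (1+x)\<^sup>2 * \<epsilon> * x\<^sup>2"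
    using e by (simp add: field_simps power2_eq_square power3_eq_cube)
  have "\<bar>G/\<epsilon>^3 - x\<^sup>2*(V*\<gamma> - V\<^sup>2*x/3)\<bar> \<le> KE * (\<epsilon> + \<epsilon>*x)\<^sup>2 * (\<epsilon>*x)\<^sup>2 / \<epsilon>^3"
    unfolding eq using h e by (simp add: divide_right_mono)
  also have "\<dots> = KE * (1+x)\<^sup>2 * \<epsilon> * x\<^sup>2" by (rule eq2)
  also have "\<dots> \<le> KE * (1+X)\<^sup>2 * \<epsilon> * x\<^sup>2"
    using x K e by (intro mult_right_mono mult_left_mono power_mono) auto
  finally show ?thesis .
qed

lemma L2:
  fixes G KC \<epsilon> x X :: real
  assumes h: "\<bar>G - 2*V*\<gamma>*\<epsilon>*(\<epsilon>*x) + V\<^sup>2*(\<epsilon>*x)\<^sup>2\<bar> \<le> KC * (\<epsilon> + \<epsilon>*x)\<^sup>2 * (\<epsilon>*x)"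
    and e: "0 < \<epsilon>" "\<epsilon> \<le> 1" and x: "0 \<le> x" "x \<le> X" and K: "KC \<ge> 0"
  shows "\<bar>G/\<epsilon>\<^sup>2 - (2*V*\<gamma>*x - V\<^sup>2*x\<^sup>2)\<bar> \<le> KC*(1+X)\<^sup>2*X * \<epsilon>"
proof -
  have eq: "G/\<epsilon>\<^sup>2 - (2*V*\<gamma>*x - V\<^sup>2*x\<^sup>2) = (G - 2*V*\<gamma>*\<epsilon>*(\<epsilon>*x) + V\<^sup>2*(\<epsilon>*x)\<^sup>2)/\<epsilon>\<^sup>2"
    using e by (simp add: field_simps power2_eq_square)
  have eq2: "KC * (\<epsilon> + \<epsilon>*x)\<^sup>2 * (\<epsilon>*x) / \<epsilon>\<^sup>2 = KC * (1+x)\<^sup>2 * x * \<epsilon>"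
    using e by (simp add: field_simps power2_eq_square)
  have "\<bar>G/\<epsilon>\<^sup>2 - (2*V*\<gamma>*x - V\<^sup>2*x\<^sup>2)\<bar> \<le> KC * (\<epsilon> + \<epsilon>*x)\<^sup>2 * (\<epsilon>*x) / \<epsilon>\<^sup>2"
    unfolding eq using h e by (simp add: divide_right_mono)
  also have "\<dots> = KC * (1+x)\<^sup>2 * x * \<epsilon>" by (rule eq2)
  also have "\<dots> \<le> KC*(1+X)\<^sup>2*X * \<epsilon>"
    using x K e by (intro mult_right_mono mult_mono mult_left_mono power_mono) auto
  finally show ?thesis .
qed

lemma small_le: "0 \<le> (K::real) \<Longrightarrow> 0 < e \<Longrightarrow> e < a / (K+1) \<Longrightarrow> K * e \<le> a"
proof -
  assume h: "0 \<le> K" "0 < e" "e < a / (K+1)"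
  then have "e * (K+1) < a" by (simp add: pos_less_divide_eq)
  moreover have "K * e \<le> e * (K+1)" using h by (simp add: algebra_simps)
  ultimately show ?thesis by simp
qed

lemma abs_le_of_sq: "(a::real)\<^sup>2 \<le> M \<Longrightarrow> \<bar>a\<bar> \<le> 1 + M"
proof (cases "\<bar>a\<bar> \<le> 1")
  case True
  moreover assume "a\<^sup>2 \<le> M"
  moreover have "0 \<le> a\<^sup>2" by simp
  ultimately show ?thesis by linarith
next
  case False
  assume h: "a\<^sup>2 \<le> M"
  have "\<bar>a\<bar> * 1 \<le> \<bar>a\<bar> * \<bar>a\<bar>" using False by (intro mult_left_mono) auto
  also have "\<dots> = a\<^sup>2" by (simp add: power2_eq_square abs_mult_self_eq)
  finally show ?thesis using h by simp
qed

lemma main: "\<exists>\<epsilon>0 > 0. \<exists>C > 0. \<exists>\<delta>0 > 0.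
    (\<forall>\<epsilon> n u \<phi>. 0 < \<epsilon> \<and> \<epsilon> < \<epsilon>0 \<and> solitary_wave \<sigma> \<gamma> V \<epsilon> n u \<phi> \<longrightarrow>
      (let Nt = (\<lambda>\<xi>. (n \<xi> - 1) / \<epsilon>);
           Et = (\<lambda>\<xi>. - deriv \<phi> \<xi> / \<epsilon>);
           h = (\<lambda>m. (V + \<gamma> * \<epsilon>)\<^sup>2 / m ^ 3 - \<sigma> / m)
       in Nt 0 > 2 * \<gamma> / V \<and>
          4 * \<gamma>\<^sup>2 > deriv Et 0 \<and> deriv Et 0 > 2 * \<gamma>\<^sup>2 \<and>
          1/2 < (SUP \<xi>. h (n \<xi>)) \<and> (SUP \<xi>. h (n \<xi>)) < 3/2 \<and>
          (\<forall>\<xi>. \<bar>deriv Nt \<xi>\<bar> + \<bar>Et \<xi>\<bar> + \<bar>deriv (deriv Et) \<xi>\<bar> \<le> C) \<and>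
          (\<forall>\<delta>. 0 < \<delta> \<and> \<delta> < \<delta>0 \<longrightarrow>
             (\<forall>\<xi>. Nt \<xi> \<le> \<delta> \<longrightarrow> \<bar>Et \<xi>\<bar> > sqrt \<gamma> * Nt \<xi>))))"
proof -
  obtain KE where KE: "KE \<ge> 0" "\<And>\<epsilon> t. 0 < \<epsilon> \<Longrightarrow> \<epsilon> \<le> 1 \<Longrightarrow> 0 \<le> t \<Longrightarrow> t \<le> 1 \<Longrightarrow>
   \<bar>GG \<sigma> (V+\<gamma>*\<epsilon>) t - V*\<gamma>*\<epsilon>*t\<^sup>2 + V\<^sup>2*t^3/3\<bar> \<le> KE * (\<epsilon> + t)\<^sup>2 * t\<^sup>2" using estE by blast
  obtain KC where KC: "KC \<ge> 0" "\<And>\<epsilon> t. 0 < \<epsilon> \<Longrightarrow> \<epsilon> \<le> 1 \<Longrightarrow> 0 \<le> t \<Longrightarrow>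
   \<bar>gg \<sigma> (V+\<gamma>*\<epsilon>) t - 2*V*\<gamma>*\<epsilon>*t + V\<^sup>2*t\<^sup>2\<bar> \<le> KC * (\<epsilon> + t)\<^sup>2 * t" using estC by blast
  obtain KH where KH: "KH \<ge> 0" "\<And>\<epsilon> t. 0 < \<epsilon> \<Longrightarrow> \<epsilon> \<le> 1 \<Longrightarrow> 0 \<le> t \<Longrightarrow>
   \<bar>hh \<sigma> (V+\<gamma>*\<epsilon>) (1+t) - 1\<bar> \<le> KH * (\<epsilon> + t)" using estH by blast
  obtain K1 where K1: "K1 \<ge> 0" "\<And>\<epsilon> t. 0 < \<epsilon> \<Longrightarrow> \<epsilon> \<le> 1 \<Longrightarrow> 0 \<le> t \<Longrightarrow> t \<le> 1 \<Longrightarrow>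
   \<bar>g1 \<sigma> (V+\<gamma>*\<epsilon>) t\<bar> \<le> K1 * (\<epsilon> + t)" using estg1 by blast
  have Vp: "V > 0" using V1 by simp
  define x1 where "x1 = 25*\<gamma>/(8*V)"
  define xl where "xl = 23*\<gamma>/(8*V)"
  define d0 where "d0 = 3*\<gamma>/(4*V)"
  have Vx1: "V*x1 = 25*\<gamma>/8" "V*xl = 23*\<gamma>/8" "V*d0 = 3*\<gamma>/4"
    unfolding x1_def xl_def d0_def using Vp by (simp_all add: field_simps)
  have x1p: "x1 > 0" "xl > 0" "d0 > 0" unfolding x1_def xl_def d0_def using Vp gpos by simp_all
  have xlx1: "xl < x1" "d0 < x1" unfolding x1_def xl_def d0_def using Vp gpos
    by (simp_all add: field_simps)
  define Kc where "Kc = KE*(1+x1)\<^sup>2"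
  define Kc2 where "Kc2 = KC*(1+x1)\<^sup>2*x1"
  define Kh where "Kh = KH*(1+x1)"
  define Kg1 where "Kg1 = K1*(1+x1)"
  have Kpos: "Kc \<ge> 0" "Kc2 \<ge> 0" "Kh \<ge> 0" "Kg1 \<ge> 0"
    unfolding Kc_def Kc2_def Kh_def Kg1_def using KE KC KH K1 x1p by simp_all
  define B0 where "B0 = V*\<gamma>*x1\<^sup>2 + Kc*x1\<^sup>2"
  have B0p: "B0 \<ge> 0" unfolding B0_def using Vp gpos Kpos by simp
  define C where "C = (1 + 2*B0)*(3 + 2*Kg1) + 1"
  have Cp: "C > 0" unfolding C_def using B0p Kpos
    by (smt (verit) mult_nonneg_nonneg)
  define \<epsilon>0 where "\<epsilon>0 = min (min 1 (1/x1)) (min (V*\<gamma>/48/(Kc+1)) (min (\<gamma>/8/(Kc+1))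
       (min (\<gamma>\<^sup>2/4/(Kc2+1)) (1/4/(Kh+1)))))"
  have e0p: "\<epsilon>0 > 0" unfolding \<epsilon>0_def using x1p Vp gpos Kpos by simp
  have small: "\<epsilon> \<le> 1 \<and> \<epsilon>*x1 \<le> 1 \<and> Kc*\<epsilon> \<le> V*\<gamma>/48 \<and> Kc*\<epsilon> \<le> \<gamma>/8 \<and> Kc2*\<epsilon> \<le> \<gamma>\<^sup>2/4 \<and> Kh*\<epsilon> \<le> 1/4"
    if e: "0 < \<epsilon>" "\<epsilon> < \<epsilon>0" for \<epsilon>
  proof (intro conjI)
    show "\<epsilon> \<le> 1" using e unfolding \<epsilon>0_def by simp
    have "\<epsilon> < 1/x1" using e unfolding \<epsilon>0_def by simp
    then show "\<epsilon>*x1 \<le> 1" using x1p by (simp add: less_divide_eq)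
    show "Kc*\<epsilon> \<le> V*\<gamma>/48" using e Kpos by (intro small_le) (auto simp: \<epsilon>0_def)
    show "Kc*\<epsilon> \<le> \<gamma>/8" using e Kpos by (intro small_le) (auto simp: \<epsilon>0_def)
    show "Kc2*\<epsilon> \<le> \<gamma>\<^sup>2/4" using e Kpos by (intro small_le) (auto simp: \<epsilon>0_def)
    show "Kh*\<epsilon> \<le> 1/4" using e Kpos by (intro small_le) (auto simp: \<epsilon>0_def)
  qed
  show ?thesis
  proof (rule exI[of _ \<epsilon>0], rule conjI[OF e0p], rule exI[of _ C], rule conjI[OF Cp],
      rule exI[of _ d0], rule conjI[OF x1p(3)], intro allI impI)
    fix \<epsilon> n u \<phi> assume H: "0 < \<epsilon> \<and> \<epsilon> < \<epsilon>0 \<and> solitary_wave \<sigma> \<gamma> V \<epsilon> n u \<phi>"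
    then have e: "0 < \<epsilon>" and sw: "solitary_wave \<sigma> \<gamma> V \<epsilon> n u \<phi>" by auto
    from small[of \<epsilon>] H have e1: "\<epsilon> \<le> 1" and ex1: "\<epsilon>*x1 \<le> 1" and sKc: "Kc*\<epsilon> \<le> V*\<gamma>/48"
      and sKc': "Kc*\<epsilon> \<le> \<gamma>/8" and sKc2: "Kc2*\<epsilon> \<le> \<gamma>\<^sup>2/4" and sKh: "Kh*\<epsilon> \<le> 1/4" by auto
    note O = ode[OF sw e]
    define c where "c = V + \<gamma>*\<epsilon>"
    have dn: "\<And>x. (n has_real_derivative deriv n x) (at x)" using O(1) by blast
    have dp: "\<And>x. (\<phi> has_real_derivative deriv \<phi> x) (at x)" using O(2) by blast
    have ddp: "\<And>x. (deriv \<phi> has_real_derivative deriv (deriv \<phi>) x) (at x)" using O(3) by blast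
    have phiF: "\<And>x. \<phi> x = FF \<sigma> c (n x)" using O(4) c_def by blast
    have dphi: "\<And>x. deriv \<phi> x = hh \<sigma> c (n x) * deriv n x" using O(5) c_def by blast
    have eq3: "\<And>x. \<epsilon> * deriv (deriv \<phi>) x = exp (\<phi> x) - n x" using O(6) by blast
    have en: "\<And>x. \<epsilon>/2 * (deriv \<phi> x)\<^sup>2 = GG \<sigma> c (n x - 1)" using O(7) c_def by blast
    have dp0: "deriv \<phi> 0 = 0" using O(8) .
    have nall: "\<And>x. 1 < n x \<and> n x \<le> n 0" using O(9) by blast
    have GGnn: "\<And>t. 0 < t \<Longrightarrow> t \<le> n 0 - 1 \<Longrightarrow> GG \<sigma> c t \<ge> 0" using O(10) c_def by blast
    have Gx: "\<bar>GG \<sigma> c (\<epsilon>*x)/\<epsilon>^3 - x\<^sup>2*(V*\<gamma> - V\<^sup>2*x/3)\<bar> \<le> Kc*\<epsilon>*x\<^sup>2"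
      if x: "0 \<le> x" "x \<le> x1" for x
    proof -
      have "\<epsilon>*x \<le> \<epsilon>*x1" using x e by (simp add: mult_left_mono)
      then have "\<epsilon>*x \<le> 1" using ex1 by simp
      then have "\<bar>GG \<sigma> c (\<epsilon>*x) - V*\<gamma>*\<epsilon>*(\<epsilon>*x)\<^sup>2 + V\<^sup>2*(\<epsilon>*x)^3/3\<bar> \<le> KE * (\<epsilon> + \<epsilon>*x)\<^sup>2 * (\<epsilon>*x)\<^sup>2"
        unfolding c_def using KE(2)[OF e e1, of "\<epsilon>*x"] x e by simp
      from L1[OF this e e1 x KE(1)] show ?thesis unfolding Kc_def by simp
    qed
    define x0 where "x0 = (n 0 - 1)/\<epsilon>"
    have n0: "n 0 = 1 + \<epsilon>*x0" unfolding x0_def using e by simp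
    have x0p: "x0 > 0" unfolding x0_def using nall[of 0] e by simp
    have x0lt: "x0 < x1"
    proof (rule ccontr)
      assume "\<not> x0 < x1"
      then have "\<epsilon>*x1 \<le> \<epsilon>*x0" using e by (simp add: mult_left_mono)
      then have "\<epsilon>*x1 \<le> n 0 - 1" using n0 by simp
      then have g0: "GG \<sigma> c (\<epsilon>*x1) \<ge> 0" using GGnn[of "\<epsilon>*x1"] e x1p by simp
      have A0: "GG \<sigma> c (\<epsilon>*x1)/\<epsilon>^3 \<ge> 0" using g0 e by simp
      have est: "\<bar>GG \<sigma> c (\<epsilon>*x1)/\<epsilon>^3 - x1\<^sup>2*(V*\<gamma> - V\<^sup>2*x1/3)\<bar> \<le> Kc*\<epsilon>*x1\<^sup>2"
        using Gx[of x1] x1p by simp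
      have "V\<^sup>2*x1/3 = V*(V*x1)/3" by (simp add: power2_eq_square)
      also have "\<dots> = 25*(V*\<gamma>)/24" using Vx1(1) by simp
      finally have id1: "x1\<^sup>2*(V*\<gamma> - V\<^sup>2*x1/3) = - (x1\<^sup>2*(V*\<gamma>))/24" by (simp add: algebra_simps)
      have a: "Kc*\<epsilon>*x1\<^sup>2 \<le> x1\<^sup>2*(V*\<gamma>)/48" using mult_right_mono[OF sKc, of "x1\<^sup>2"]
        by (simp add: algebra_simps)
      have P: "x1\<^sup>2*(V*\<gamma>) > 0" using x1p Vp gpos by simp
      show False using A0 abs_le_D1[OF est] id1 a P by linarith
    qed
    have x0gt: "xl < x0"
    proof (rule ccontr)
      assume "\<not> xl < x0"
      then have x0l: "x0 \<le> xl" by simp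
      have G0: "GG \<sigma> c (\<epsilon>*x0) = 0" using en[of 0] dp0 n0 by simp
      have est: "\<bar>GG \<sigma> c (\<epsilon>*x0)/\<epsilon>^3 - x0\<^sup>2*(V*\<gamma> - V\<^sup>2*x0/3)\<bar> \<le> Kc*\<epsilon>*x0\<^sup>2"
        using Gx[of x0] x0p x0lt by simp
      have "V*x0 \<le> V*xl" using x0l Vp by simp
      then have "V*x0 \<le> 23*\<gamma>/8" using Vx1(2) by simp
      then have q0: "V*(V*x0) \<le> V*(23*\<gamma>/8)" using Vp by (simp add: mult_left_mono)
      have "V\<^sup>2*x0/3 = V*(V*x0)/3" by (simp add: power2_eq_square)
      also have "\<dots> \<le> V*(23*\<gamma>/8)/3" using q0 by simp
      also have "\<dots> = 23*(V*\<gamma>)/24" by simp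
      finally have "V\<^sup>2*x0/3 \<le> 23*(V*\<gamma>)/24" .
      then have "V*\<gamma>/24 \<le> V*\<gamma> - V\<^sup>2*x0/3" by simp
      then have "x0\<^sup>2*(V*\<gamma>/24) \<le> x0\<^sup>2*(V*\<gamma> - V\<^sup>2*x0/3)" by (rule mult_left_mono) simp
      then have b1: "x0\<^sup>2*(V*\<gamma>)/24 \<le> x0\<^sup>2*(V*\<gamma> - V\<^sup>2*x0/3)" by simp
      have a: "Kc*\<epsilon>*x0\<^sup>2 \<le> x0\<^sup>2*(V*\<gamma>)/48" using mult_right_mono[OF sKc, of "x0\<^sup>2"]
        by (simp add: algebra_simps)
      have P: "x0\<^sup>2*(V*\<gamma>) > 0" using x0p Vp gpos by simp
      have A0: "GG \<sigma> c (\<epsilon>*x0)/\<epsilon>^3 = 0" using G0 by simp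
      show False using A0 abs_le_D2[OF est] b1 a P by linarith
    qed
    have Nt0: "2 * \<gamma> / V < (n 0 - 1) / \<epsilon>"
    proof -
      have "2 * \<gamma> / V < xl" unfolding xl_def using Vp gpos by (simp add: field_simps)
      then show ?thesis using x0gt unfolding x0_def by simp
    qed
    have dEt: "deriv (\<lambda>\<xi>. - deriv \<phi> \<xi> / \<epsilon>) = (\<lambda>\<xi>. - (exp (\<phi> \<xi>) - n \<xi>) / \<epsilon>\<^sup>2)"
    proof (rule ext)
      fix \<xi>
      have "((\<lambda>\<xi>. - deriv \<phi> \<xi> / \<epsilon>) has_real_derivative - deriv (deriv \<phi>) \<xi> / \<epsilon>) (at \<xi>)"
        using ddp[of \<xi>] e by (auto intro!: derivative_eq_intros)
      then have "deriv (\<lambda>\<xi>. - deriv \<phi> \<xi> / \<epsilon>) \<xi> = - deriv (deriv \<phi>) \<xi> / \<epsilon>" by (rule DERIV_imp_deriv)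
      moreover have "deriv (deriv \<phi>) \<xi> = (exp (\<phi> \<xi>) - n \<xi>) / \<epsilon>" using eq3[of \<xi>] e
        by (simp add: field_simps)
      ultimately show "deriv (\<lambda>\<xi>. - deriv \<phi> \<xi> / \<epsilon>) \<xi> = - (exp (\<phi> \<xi>) - n \<xi>) / \<epsilon>\<^sup>2"
        using e by (simp add: power2_eq_square field_simps)
    qed
    have gg0: "gg \<sigma> c (\<epsilon>*x0) = exp (\<phi> 0) - n 0" unfolding gg_def using phiF[of 0] n0 by simp
    have dEt0: "deriv (\<lambda>\<xi>. - deriv \<phi> \<xi> / \<epsilon>) 0 = - (gg \<sigma> c (\<epsilon>*x0) / \<epsilon>\<^sup>2)"
      unfolding dEt gg0 by (simp add: minus_divide_left)
    have est2: "\<bar>gg \<sigma> c (\<epsilon>*x0) / \<epsilon>\<^sup>2 - (2*V*\<gamma>*x0 - V\<^sup>2*x0\<^sup>2)\<bar> \<le> Kc2 * \<epsilon>"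
    proof -
      have "\<bar>gg \<sigma> c (\<epsilon>*x0) - 2*V*\<gamma>*\<epsilon>*(\<epsilon>*x0) + V\<^sup>2*(\<epsilon>*x0)\<^sup>2\<bar> \<le> KC * (\<epsilon> + \<epsilon>*x0)\<^sup>2 * (\<epsilon>*x0)"
        unfolding c_def using KC(2)[OF e e1, of "\<epsilon>*x0"] e x0p by simp
      from L2[OF this e e1 _ _ KC(1), of x1] x0p x0lt show ?thesis unfolding Kc2_def by simp
    qed
    define y where "y = V*x0"
    have y1: "23*\<gamma>/8 < y" "y < 25*\<gamma>/8" unfolding y_def using Vx1 x0gt x0lt Vp
      by (metis mult_strict_left_mono)+
    have ysq: "2*V*\<gamma>*x0 - V\<^sup>2*x0\<^sup>2 = \<gamma>\<^sup>2 - (y - \<gamma>)\<^sup>2"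
      unfolding y_def by (simp add: power2_eq_square algebra_simps)
    have "(15*\<gamma>/8)\<^sup>2 < (y - \<gamma>)\<^sup>2" using y1 gpos by (intro power_strict_mono) auto
    then have yl: "225/64*\<gamma>\<^sup>2 < (y - \<gamma>)\<^sup>2" by (simp add: power2_eq_square)
    have "(y - \<gamma>)\<^sup>2 < (17*\<gamma>/8)\<^sup>2" using y1 gpos by (intro power_strict_mono) auto
    then have yu: "(y - \<gamma>)\<^sup>2 < 289/64*\<gamma>\<^sup>2" by (simp add: power2_eq_square)
    have g2p: "\<gamma>\<^sup>2 > 0" using gpos by simp
    have Et0a: "deriv (\<lambda>\<xi>. - deriv \<phi> \<xi> / \<epsilon>) 0 < 4 * \<gamma>\<^sup>2"
      using dEt0 abs_le_D1[OF est2] abs_le_D2[OF est2] ysq yu sKc2 g2p by linarith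
    have Et0b: "2 * \<gamma>\<^sup>2 < deriv (\<lambda>\<xi>. - deriv \<phi> \<xi> / \<epsilon>) 0"
      using dEt0 abs_le_D1[OF est2] abs_le_D2[OF est2] ysq yl sKc2 g2p by linarith
    have tb: "0 < n \<xi> - 1" "n \<xi> - 1 \<le> \<epsilon>*x1" "\<epsilon> + (n \<xi> - 1) \<le> \<epsilon>*(1+x1)" for \<xi>
    proof -
      show "0 < n \<xi> - 1" using nall[of \<xi>] by simp
      have "n \<xi> - 1 \<le> \<epsilon>*x0" using nall[of \<xi>] n0 by simp
      also have "\<dots> \<le> \<epsilon>*x1" using x0lt e by simp
      finally show "n \<xi> - 1 \<le> \<epsilon>*x1" .
      then show "\<epsilon> + (n \<xi> - 1) \<le> \<epsilon>*(1+x1)" by (simp add: algebra_simps)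
    qed
    have hb: "\<bar>hh \<sigma> c (n \<xi>) - 1\<bar> \<le> 1/4" for \<xi>
    proof -
      have "\<bar>hh \<sigma> c (1 + (n \<xi> - 1)) - 1\<bar> \<le> KH * (\<epsilon> + (n \<xi> - 1))"
        unfolding c_def using KH(2)[OF e e1, of "n \<xi> - 1"] tb(1)[of \<xi>] by simp
      also have "\<dots> \<le> KH * (\<epsilon>*(1+x1))" using tb(3) KH(1) by (intro mult_left_mono)
      also have "\<dots> = Kh*\<epsilon>" unfolding Kh_def by simp
      finally show ?thesis using sKh by simp
    qed
    have hfun: "(\<lambda>m. (V + \<gamma> * \<epsilon>)\<^sup>2 / m ^ 3 - \<sigma> / m) = hh \<sigma> c"
      by (rule ext) (simp add: hh_def c_def)
    have hu: "hh \<sigma> c (n \<xi>) \<le> 5/4" for \<xi> using abs_le_D1[OF hb[of \<xi>]] by linarith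
    have hl: "hh \<sigma> c (n \<xi>) \<ge> 3/4" for \<xi> using abs_le_D2[OF hb[of \<xi>]] by linarith
    have bdd: "bdd_above (range (\<lambda>\<xi>. hh \<sigma> c (n \<xi>)))"
      using hu by (intro bdd_aboveI[where M="5/4"]) auto
    have sup1: "hh \<sigma> c (n 0) \<le> (SUP \<xi>. hh \<sigma> c (n \<xi>))" by (rule cSUP_upper[OF _ bdd]) simp
    have sup2: "(SUP \<xi>. hh \<sigma> c (n \<xi>)) \<le> 5/4"
      by (rule cSUP_least) (use hu in auto)
    have supl: "1/2 < (SUP \<xi>. hh \<sigma> c (n \<xi>))" using sup1 hl[of 0] by linarith
    have supu: "(SUP \<xi>. hh \<sigma> c (n \<xi>)) < 3/2" using sup2 by simp
    have EtG: "(deriv \<phi> \<xi> / \<epsilon>)\<^sup>2 = 2 * (GG \<sigma> c (\<epsilon> * ((n \<xi> - 1)/\<epsilon>)) / \<epsilon>^3)" for \<xi>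
    proof -
      have "\<epsilon> * ((n \<xi> - 1)/\<epsilon>) = n \<xi> - 1" using e by simp
      then have "GG \<sigma> c (\<epsilon> * ((n \<xi> - 1)/\<epsilon>)) = \<epsilon>/2 * (deriv \<phi> \<xi>)\<^sup>2" using en[of \<xi>] by simp
      then show ?thesis using e by (simp add: field_simps power2_eq_square power3_eq_cube)
    qed
    have xb: "0 < (n \<xi> - 1)/\<epsilon>" "(n \<xi> - 1)/\<epsilon> \<le> x1" for \<xi>
      using tb[of \<xi>] e by (simp_all add: divide_le_eq mult.commute)
    have Etb: "\<bar>deriv \<phi> \<xi> / \<epsilon>\<bar> \<le> 1 + 2*B0" for \<xi>
    proof -
      define x where "x = (n \<xi> - 1)/\<epsilon>"
      have x: "0 \<le> x" "x \<le> x1" using xb[of \<xi>] unfolding x_def by auto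
      have est: "\<bar>GG \<sigma> c (\<epsilon>*x)/\<epsilon>^3 - x\<^sup>2*(V*\<gamma> - V\<^sup>2*x/3)\<bar> \<le> Kc*\<epsilon>*x\<^sup>2" by (rule Gx[OF x])
      have "x\<^sup>2*(V*\<gamma> - V\<^sup>2*x/3) \<le> x\<^sup>2*(V*\<gamma>)" using x by (intro mult_left_mono) auto
      also have "\<dots> \<le> x1\<^sup>2*(V*\<gamma>)" using x Vp gpos by (intro mult_right_mono power_mono) auto
      finally have a1: "x\<^sup>2*(V*\<gamma> - V\<^sup>2*x/3) \<le> x1\<^sup>2*(V*\<gamma>)" .
      have "Kc*\<epsilon>*x\<^sup>2 \<le> Kc*1*x\<^sup>2" using e1 Kpos by (intro mult_right_mono mult_left_mono) auto
      also have "\<dots> \<le> Kc*x1\<^sup>2" using x Kpos by (simp add: mult_left_mono power_mono)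
      finally have a2: "Kc*\<epsilon>*x\<^sup>2 \<le> Kc*x1\<^sup>2" .
      have "GG \<sigma> c (\<epsilon>*x)/\<epsilon>^3 \<le> B0" unfolding B0_def using abs_le_D1[OF est] a1 a2 mult.commute[of "V*\<gamma>" "x1\<^sup>2"] by linarith
      then have "(deriv \<phi> \<xi> / \<epsilon>)\<^sup>2 \<le> 2*B0" using EtG[of \<xi>] unfolding x_def by simp
      then show ?thesis by (rule abs_le_of_sq)
    qed
    have dNt: "deriv (\<lambda>\<xi>. (n \<xi> - 1) / \<epsilon>) \<xi> = deriv n \<xi> / \<epsilon>" for \<xi>
      by (rule DERIV_imp_deriv) (use dn[of \<xi>] e in \<open>auto intro!: derivative_eq_intros\<close>)
    have ddEt: "deriv (deriv (\<lambda>\<xi>. - deriv \<phi> \<xi> / \<epsilon>)) \<xi> = - (exp (\<phi> \<xi>) * deriv \<phi> \<xi> - deriv n \<xi>) / \<epsilon>\<^sup>2" for \<xi>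
      unfolding dEt
      by (rule DERIV_imp_deriv) (use dn[of \<xi>] dp[of \<xi>] e in \<open>auto intro!: derivative_eq_intros simp: power2_eq_square\<close>)
    have nb: "\<bar>deriv n \<xi> / \<epsilon>\<bar> \<le> 2 * \<bar>deriv \<phi> \<xi> / \<epsilon>\<bar>" for \<xi>
    proof -
      have "\<bar>deriv \<phi> \<xi> / \<epsilon>\<bar> = \<bar>hh \<sigma> c (n \<xi>)\<bar> * \<bar>deriv n \<xi> / \<epsilon>\<bar>"
        using dphi[of \<xi>] by (simp add: abs_mult)
      moreover have "\<bar>hh \<sigma> c (n \<xi>)\<bar> \<ge> 1/2" using hl[of \<xi>] by linarith
      ultimately have "\<bar>deriv \<phi> \<xi> / \<epsilon>\<bar> \<ge> 1/2 * \<bar>deriv n \<xi> / \<epsilon>\<bar>"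
        by (metis abs_ge_zero mult_right_mono)
      then show ?thesis by simp
    qed
    have g1b: "\<bar>g1 \<sigma> c (n \<xi> - 1)\<bar> \<le> Kg1 * \<epsilon>" for \<xi>
    proof -
      have "n \<xi> - 1 \<le> 1" using tb(2)[of \<xi>] ex1 by simp
      then have "\<bar>g1 \<sigma> c (n \<xi> - 1)\<bar> \<le> K1 * (\<epsilon> + (n \<xi> - 1))"
        unfolding c_def using K1(2)[OF e e1, of "n \<xi> - 1"] tb(1)[of \<xi>] by simp
      also have "\<dots> \<le> K1 * (\<epsilon>*(1+x1))" using tb(3) K1(1) by (intro mult_left_mono)
      finally show ?thesis unfolding Kg1_def by (simp add: mult_ac)
    qed
    have ddb: "\<bar>deriv (deriv (\<lambda>\<xi>. - deriv \<phi> \<xi> / \<epsilon>)) \<xi>\<bar> \<le> 2 * Kg1 * \<bar>deriv \<phi> \<xi> / \<epsilon>\<bar>" for \<xi>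
    proof -
      have "exp (\<phi> \<xi>) * deriv \<phi> \<xi> - deriv n \<xi> = deriv n \<xi> * g1 \<sigma> c (n \<xi> - 1)"
        unfolding g1_def dphi phiF by (simp add: algebra_simps)
      then have "\<bar>deriv (deriv (\<lambda>\<xi>. - deriv \<phi> \<xi> / \<epsilon>)) \<xi>\<bar> = \<bar>deriv n \<xi> / \<epsilon>\<bar> * (\<bar>g1 \<sigma> c (n \<xi> - 1)\<bar> / \<epsilon>)"
        unfolding ddEt using e by (simp add: abs_mult power2_eq_square abs_divide)
      also have "\<dots> \<le> (2 * \<bar>deriv \<phi> \<xi> / \<epsilon>\<bar>) * Kg1"
        using nb[of \<xi>] g1b[of \<xi>] e by (intro mult_mono) (auto simp: divide_le_eq)
      finally show ?thesis by (simp add: algebra_simps)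
    qed
    have Cb: "\<bar>deriv (\<lambda>\<xi>. (n \<xi> - 1) / \<epsilon>) \<xi>\<bar> + \<bar>- deriv \<phi> \<xi> / \<epsilon>\<bar> + \<bar>deriv (deriv (\<lambda>\<xi>. - deriv \<phi> \<xi> / \<epsilon>)) \<xi>\<bar> \<le> C" for \<xi>
    proof -
      have "\<bar>deriv (\<lambda>\<xi>. (n \<xi> - 1) / \<epsilon>) \<xi>\<bar> + \<bar>- deriv \<phi> \<xi> / \<epsilon>\<bar> + \<bar>deriv (deriv (\<lambda>\<xi>. - deriv \<phi> \<xi> / \<epsilon>)) \<xi>\<bar>
          \<le> (3 + 2*Kg1) * \<bar>deriv \<phi> \<xi> / \<epsilon>\<bar>"
        unfolding dNt using nb[of \<xi>] ddb[of \<xi>] by (simp add: algebra_simps)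
      also have "\<dots> \<le> (3 + 2*Kg1) * (1 + 2*B0)" using Etb[of \<xi>] Kpos by (intro mult_left_mono) auto
      also have "\<dots> \<le> C" unfolding C_def by (simp add: algebra_simps)
      finally show ?thesis .
    qed
    have P2: "sqrt \<gamma> * ((n \<xi> - 1) / \<epsilon>) < \<bar>- deriv \<phi> \<xi> / \<epsilon>\<bar>" if d: "0 < \<delta>" "\<delta> < d0" "(n \<xi> - 1) / \<epsilon> \<le> \<delta>" for \<delta> \<xi>
    proof -
      define x where "x = (n \<xi> - 1)/\<epsilon>"
      have xp: "0 < x" using xb[of \<xi>] unfolding x_def by simp
      have xd: "x \<le> d0" using d unfolding x_def by simp
      have x: "0 \<le> x" "x \<le> x1" using xp xd xlx1 by auto
      have est: "\<bar>GG \<sigma> c (\<epsilon>*x)/\<epsilon>^3 - x\<^sup>2*(V*\<gamma> - V\<^sup>2*x/3)\<bar> \<le> Kc*\<epsilon>*x\<^sup>2" by (rule Gx[OF x])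
      have "V*x \<le> V*d0" using xd Vp by simp
      then have q0: "V*(V*x) \<le> V*(3*\<gamma>/4)" using Vx1(3) Vp by (simp add: mult_left_mono)
      have "V\<^sup>2*x/3 = V*(V*x)/3" by (simp add: power2_eq_square)
      also have "\<dots> \<le> V*(3*\<gamma>/4)/3" using q0 by simp
      also have "\<dots> = (V*\<gamma>)/4" by simp
      finally have q1: "V\<^sup>2*x/3 \<le> (V*\<gamma>)/4" .
      have "\<gamma> \<le> V*\<gamma>" using V1 gpos by simp
      then have "3*\<gamma>/4 \<le> V*\<gamma> - V\<^sup>2*x/3" using q1 by simp
      then have a1: "x\<^sup>2*(3*\<gamma>/4) \<le> x\<^sup>2*(V*\<gamma> - V\<^sup>2*x/3)" by (rule mult_left_mono) simp
      have a1': "x\<^sup>2*\<gamma>*3/4 \<le> x\<^sup>2*(V*\<gamma> - V\<^sup>2*x/3)" using a1 by simp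
      have a2: "Kc*\<epsilon>*x\<^sup>2 \<le> x\<^sup>2*\<gamma>/8" using mult_right_mono[OF sKc', of "x\<^sup>2"] by (simp add: algebra_simps)
      have P: "x\<^sup>2*\<gamma> > 0" using xp gpos by simp
      have E: "(deriv \<phi> \<xi> / \<epsilon>)\<^sup>2 = 2 * (GG \<sigma> c (\<epsilon> * x) / \<epsilon>^3)" using EtG[of \<xi>] unfolding x_def .
      have "(deriv \<phi> \<xi> / \<epsilon>)\<^sup>2 > x\<^sup>2*\<gamma>" using E abs_le_D2[OF est] a1' a2 P by linarith
      then have "(deriv \<phi> \<xi> / \<epsilon>)\<^sup>2 > \<gamma> * x\<^sup>2" by (simp add: mult.commute)
      then have "sqrt (\<gamma> * x\<^sup>2) < sqrt ((deriv \<phi> \<xi> / \<epsilon>)\<^sup>2)" by (rule real_sqrt_less_mono)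
      then have "sqrt \<gamma> * x < \<bar>deriv \<phi> \<xi> / \<epsilon>\<bar>" using xp by (simp add: real_sqrt_mult)
      then show ?thesis unfolding x_def by simp
    qed
    show "let Nt = (\<lambda>\<xi>. (n \<xi> - 1) / \<epsilon>);
           Et = (\<lambda>\<xi>. - deriv \<phi> \<xi> / \<epsilon>);
           h = (\<lambda>m. (V + \<gamma> * \<epsilon>)\<^sup>2 / m ^ 3 - \<sigma> / m)
       in Nt 0 > 2 * \<gamma> / V \<and>
          4 * \<gamma>\<^sup>2 > deriv Et 0 \<and> deriv Et 0 > 2 * \<gamma>\<^sup>2 \<and>
          1/2 < (SUP \<xi>. h (n \<xi>)) \<and> (SUP \<xi>. h (n \<xi>)) < 3/2 \<and>
          (\<forall>\<xi>. \<bar>deriv Nt \<xi>\<bar> + \<bar>Et \<xi>\<bar> + \<bar>deriv (deriv Et) \<xi>\<bar> \<le> C) \<and>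
          (\<forall>\<delta>. 0 < \<delta> \<and> \<delta> < d0 \<longrightarrow>
             (\<forall>\<xi>. Nt \<xi> \<le> \<delta> \<longrightarrow> \<bar>Et \<xi>\<bar> > sqrt \<gamma> * Nt \<xi>))"
      unfolding Let_def hfun using Nt0 Et0a Et0b supl supu Cb P2 by blast
  qed
qed

end

theorem lemma4p1:
  fixes \<sigma> \<gamma> V :: real
  assumes "\<sigma> \<ge> 0" and "\<gamma> > 0" and "V = sqrt (1 + \<sigma>)"
  shows "\<exists>\<epsilon>0 > 0. \<exists>C > 0. \<exists>\<delta>0 > 0.
    (\<forall>\<epsilon> n u \<phi>. 0 < \<epsilon> \<and> \<epsilon> < \<epsilon>0 \<and> solitary_wave \<sigma> \<gamma> V \<epsilon> n u \<phi> \<longrightarrow>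
      (let Nt = (\<lambda>\<xi>. (n \<xi> - 1) / \<epsilon>);
           Et = (\<lambda>\<xi>. - deriv \<phi> \<xi> / \<epsilon>);
           h = (\<lambda>m. (V + \<gamma> * \<epsilon>)\<^sup>2 / m ^ 3 - \<sigma> / m)
       in Nt 0 > 2 * \<gamma> / V \<and>
          4 * \<gamma>\<^sup>2 > deriv Et 0 \<and> deriv Et 0 > 2 * \<gamma>\<^sup>2 \<and>
          1/2 < (SUP \<xi>. h (n \<xi>)) \<and> (SUP \<xi>. h (n \<xi>)) < 3/2 \<and>
          (\<forall>\<xi>. \<bar>deriv Nt \<xi>\<bar> + \<bar>Et \<xi>\<bar> + \<bar>deriv (deriv Et) \<xi>\<bar> \<le> C) \<and>
          (\<forall>\<delta>. 0 < \<delta> \<and> \<delta> < \<delta>0 \<longrightarrow>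
             (\<forall>\<xi>. Nt \<xi> \<le> \<delta> \<longrightarrow> \<bar>Et \<xi>\<bar> > sqrt \<gamma> * Nt \<xi>))))"
proof -
  have V1: "V \<ge> 1" using assms(1,3) by simp
  have sg: "\<sigma> = V\<^sup>2 - 1" using assms(1,3) by simp
  show ?thesis by (rule main[OF V1 assms(2) sg])
qed

end
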